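(* Let $\Lambda$ be a finite, strongly connected $k$-graph, $y$ an $\mathbb{R}_+$-functor on $\Lambda$ and $\theta\in(0,\infty)$, such that condition (w-I) holds if $|\Lambda^0|=1$ and condition (w-II) holds otherwise. Define $d_{y,\theta}$ on $\Lambda^\infty\cong X_{\mathcal{B}_\Lambda}$ by $d_{y,\theta}(x,z)=1$ if $r(x)\ne r(z)$, $d_{y,\theta}(x,x)=0$, and $d_{y,\theta}(x,z)=w_{y,\theta}(x\wedge z)$ otherwise (equivalently $d_{y,\theta}(x,z)=\inf\{w_{y,\theta}(\lambda):\lambda\in F\mathcal{B}_\Lambda,\ x,z\in Z(\lambda)\}$ when $r(x)=r(z)$). Then $d_{y,\theta}$ is an ultrametric on $\Lambda^\infty$, and the topology it induces is the cylinder set topology.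
   Context: A $k$-graph is a countable small category $\Lambda$ with a degree functor $d:\Lambda\to\mathbb{N}^k$ satisfying unique factorization: if $d(\lambda)=m+n$ there are unique $\eta,\nu$ with $\lambda=\eta\nu$, $d(\eta)=m$, $d(\nu)=n$. $\Lambda^n=d^{-1}(n)$, $\Lambda^0$ = vertices, $r,s$ range/source, $v\Lambda^nw$ paths of degree $n$ from $w$ to $v$; $e_i$ standard basis; finite: each $\Lambda^n$ finite; strongly connected: $v\Lambda w\ne\emptyset$ for all vertices. An $\mathbb{R}_+$-functor is $y:\Lambda\to[0,\infty)$ with $y(v)=0$ on vertices and $y(\lambda\nu)=y(\lambda)+y(\nu)$ when $s(\lambda)=r(\nu)$. $B_i(y,\theta)_{v,w}=\sum_{\lambda\in v\Lambda^{e_i}w}e^{-\theta y(\lambda)}$; unique $\xi^{y,\theta}\in(0,\infty)^{\Lambda^0}$ with $\sum_v\xi^{y,\theta}_v=1$ and $B_i(y,\theta)\xi^{y,\theta}=\rho(B_i(y,\theta))\xi^{y,\theta}$ for all $i$ ($\rho$ = spectral radius); $\rho(B(y,\theta))^m=\prod_i\rho(B_i(y,\theta))^{m_i}$. Condition (w-I): $\rho(B_i(y,\theta))>1$ for all $i$. Condition (w-II): there is $i$ with $\rho(B_i(y,\theta))>\max_{v,w}B_i(y,\theta)_{v,w}$. Stationary $k$-Bratteli diagram $\mathcal{B}_\Lambda$: vertex sets $\mathcal{V}_n=\Lambda^0$; for $n\ge1$, $n\equiv i\pmod k$, $i\in\{1,\dots,k\}$, edge set $\mathcal{E}_n$ with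 one edge from $q\in\mathcal{V}_n$ to $p\in\mathcal{V}_{n-1}$ per $\lambda\in p\Lambda^{e_i}q$. Finite paths $f_1\cdots f_n$ ($f_j\in\mathcal{E}_j$, $s(f_j)=r(f_{j+1})$; length 0 = vertices of $\mathcal{V}_0$) form $F\mathcal{B}_\Lambda$ and are identified with morphisms $f_1\cdots f_n\in\Lambda$; infinite paths $f_1f_2\cdots$ form $X_{\mathcal{B}_\Lambda}$, with cylinder sets $Z(\lambda)$ (infinite paths with initial segment $\lambda$) generating the cylinder set topology; $r(x)=r(f_1)\in\mathcal{V}_0$. For $x\ne z$ with $r(x)=r(z)$, $x\wedge z$ is their longest common initial segment. $X_{\mathcal{B}_\Lambda}$ is naturally homeomorphic to the infinite path space $\Lambda^\infty$ (degree-preserving functors from $\Omega_k$ into $\Lambda$, topologized by cylinder sets), compatibly with cylinder sets. $w_{y,\theta}(\lambda)=e^{-y(\lambda)}\big(\rho(B(y,\theta))^{-d(\lambda)}\xi^{y,\theta}_{s(\lambda)}\big)^{1/\theta}$ for $\lambda\in F\mathcal{B}_\Lambda$. A metric $d$ is an ultrametric if $d(x,z)\le\max\{d(x,u),d(u,z)\}$ for all $x,z,u$. *)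

theory Defs
  imports "HOL-Analysis.Analysis"
begin

text \<open>A small category with morphism set mor, range rg, source sr, composition cmp
  (meaningful when sr l = rg n; cmp l n is "l n") and degree dg into N^k, where N^k is
  represented as functions nat => nat vanishing at all i >= k (coordinates 0..k-1).
  Objects are identified with the identity morphisms, i.e. the morphisms of degree 0.\<close>

record 'a kgraph =
  mor :: "'a set"
  rg  :: "'a \<Rightarrow> 'a"
  sr  :: "'a \<Rightarrow> 'a"
  cmp :: "'a \<Rightarrow> 'a \<Rightarrow> 'a"
  dg  :: "'a \<Rightarrow> nat \<Rightarrow> nat"

definition kvec :: "nat \<Rightarrow> (nat \<Rightarrow> nat) \<Rightarrow> bool" where
  "kvec k m \<longleftrightarrow> (\<forall>i\<ge>k. m i = 0)"

definition vadd :: "(nat \<Rightarrow> nat) \<Rightarrow> (nat \<Rightarrow> nat) \<Rightarrow> nat \<Rightarrow> nat" where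
  "vadd m n = (\<lambda>i. m i + n i)"

definition vsub :: "(nat \<Rightarrow> nat) \<Rightarrow> (nat \<Rightarrow> nat) \<Rightarrow> nat \<Rightarrow> nat" where
  "vsub n m = (\<lambda>i. n i - m i)"

definition vzero :: "nat \<Rightarrow> nat" where "vzero = (\<lambda>_. 0)"

definition ebas :: "nat \<Rightarrow> nat \<Rightarrow> nat" where
  "ebas i = (\<lambda>j. if j = i then 1 else 0)"

definition vertices :: "'a kgraph \<Rightarrow> 'a set" where
  "vertices G = {v \<in> mor G. dg G v = vzero}"

definition is_kgraph :: "nat \<Rightarrow> 'a kgraph \<Rightarrow> bool" where
  "is_kgraph k G \<longleftrightarrow>
     0 < k \<and> countable (mor G) \<and>
     (\<forall>l\<in>mor G. kvec k (dg G l)) \<and>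
     (\<forall>l\<in>mor G. rg G l \<in> vertices G \<and> sr G l \<in> vertices G) \<and>
     (\<forall>v\<in>vertices G. rg G v = v \<and> sr G v = v) \<and>
     (\<forall>l\<in>mor G. cmp G (rg G l) l = l \<and> cmp G l (sr G l) = l) \<and>
     (\<forall>l\<in>mor G. \<forall>n\<in>mor G. sr G l = rg G n \<longrightarrow>
        cmp G l n \<in> mor G \<and> rg G (cmp G l n) = rg G l \<and> sr G (cmp G l n) = sr G n \<and>
        dg G (cmp G l n) = vadd (dg G l) (dg G n)) \<and>
     (\<forall>l\<in>mor G. \<forall>n\<in>mor G. \<forall>p\<in>mor G. sr G l = rg G n \<and> sr G n = rg G p \<longrightarrow>
        cmp G (cmp G l n) p = cmp G l (cmp G n p)) \<and>
     (\<forall>l\<in>mor G. \<forall>m n. kvec k m \<and> kvec k n \<and> dg G l = vadd m n \<longrightarrow>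
        (\<exists>!(e, f). e \<in> mor G \<and> f \<in> mor G \<and> sr G e = rg G f \<and> l = cmp G e f \<and>
                   dg G e = m \<and> dg G f = n))"

definition finite_kgraph :: "nat \<Rightarrow> 'a kgraph \<Rightarrow> bool" where
  "finite_kgraph k G \<longleftrightarrow> (\<forall>n. finite {l \<in> mor G. dg G l = n})"

definition strongly_connected :: "'a kgraph \<Rightarrow> bool" where
  "strongly_connected G \<longleftrightarrow>
     (\<forall>v\<in>vertices G. \<forall>w\<in>vertices G. \<exists>l\<in>mor G. rg G l = v \<and> sr G l = w)"

definition Rplus_functor :: "'a kgraph \<Rightarrow> ('a \<Rightarrow> real) \<Rightarrow> bool" where
  "Rplus_functor G y \<longleftrightarrow>
     (\<forall>l\<in>mor G. y l \<ge> 0) \<and> (\<forall>v\<in>vertices G. y v = 0) \<and>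
     (\<forall>l\<in>mor G. \<forall>n\<in>mor G. sr G l = rg G n \<longrightarrow> y (cmp G l n) = y l + y n)"

definition Bmat :: "'a kgraph \<Rightarrow> ('a \<Rightarrow> real) \<Rightarrow> real \<Rightarrow> nat \<Rightarrow> 'a \<Rightarrow> 'a \<Rightarrow> real" where
  "Bmat G y \<theta> i v w =
     (\<Sum>l\<in>{l \<in> mor G. dg G l = ebas i \<and> rg G l = v \<and> sr G l = w}. exp (- \<theta> * y l))"

definition specrad :: "'v set \<Rightarrow> ('v \<Rightarrow> 'v \<Rightarrow> real) \<Rightarrow> real" where
  "specrad V A = Sup {cmod c | c. \<exists>x :: 'v \<Rightarrow> complex. (\<exists>p\<in>V. x p \<noteq> 0) \<and>
       (\<forall>p\<in>V. (\<Sum>q\<in>V. complex_of_real (A p q) * x q) = c * x p)}"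

definition rhoB :: "'a kgraph \<Rightarrow> ('a \<Rightarrow> real) \<Rightarrow> real \<Rightarrow> nat \<Rightarrow> real" where
  "rhoB G y \<theta> i = specrad (vertices G) (Bmat G y \<theta> i)"

definition xivec :: "nat \<Rightarrow> 'a kgraph \<Rightarrow> ('a \<Rightarrow> real) \<Rightarrow> real \<Rightarrow> 'a \<Rightarrow> real" where
  "xivec k G y \<theta> = (THE \<xi>. (\<forall>v\<in>vertices G. \<xi> v > 0) \<and> (\<forall>v. v \<notin> vertices G \<longrightarrow> \<xi> v = 0) \<and>
      (\<Sum>v\<in>vertices G. \<xi> v) = 1 \<and>
      (\<forall>i<k. \<forall>p\<in>vertices G. (\<Sum>q\<in>vertices G. Bmat G y \<theta> i p q * \<xi> q) = rhoB G y \<theta> i * \<xi> p))"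

definition cond_wI :: "nat \<Rightarrow> 'a kgraph \<Rightarrow> ('a \<Rightarrow> real) \<Rightarrow> real \<Rightarrow> bool" where
  "cond_wI k G y \<theta> \<longleftrightarrow> (\<forall>i<k. rhoB G y \<theta> i > 1)"

definition cond_wII :: "nat \<Rightarrow> 'a kgraph \<Rightarrow> ('a \<Rightarrow> real) \<Rightarrow> real \<Rightarrow> bool" where
  "cond_wII k G y \<theta> \<longleftrightarrow> (\<exists>i<k. rhoB G y \<theta> i >
      Max {Bmat G y \<theta> i v w | v w. v \<in> vertices G \<and> w \<in> vertices G})"

definition wyt :: "nat \<Rightarrow> 'a kgraph \<Rightarrow> ('a \<Rightarrow> real) \<Rightarrow> real \<Rightarrow> 'a \<Rightarrow> real" where
  "wyt k G y \<theta> l = exp (- y l) *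
     ((\<Prod>i<k. inverse (rhoB G y \<theta> i ^ dg G l i)) * xivec k G y \<theta> (sr G l)) powr (1 / \<theta>)"

text \<open>Degree-preserving functors Omega_k -> Lambda; a morphism of Omega_k is a pair (m,n)
  with m <= n in N^k; x is represented as a curried function, undefined off Omega_k.\<close>
definition infpaths :: "nat \<Rightarrow> 'a kgraph \<Rightarrow> ((nat \<Rightarrow> nat) \<Rightarrow> (nat \<Rightarrow> nat) \<Rightarrow> 'a) set" where
  "infpaths k G = {x.
     (\<forall>m n. kvec k m \<and> kvec k n \<and> m \<le> n \<longrightarrow> x m n \<in> mor G \<and> dg G (x m n) = vsub n m) \<and>
     (\<forall>m n p. kvec k m \<and> kvec k n \<and> kvec k p \<and> m \<le> n \<and> n \<le> p \<longrightarrow>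
         sr G (x m n) = rg G (x n p) \<and> cmp G (x m n) (x n p) = x m p) \<and>
     (\<forall>m n. \<not> (kvec k m \<and> kvec k n \<and> m \<le> n) \<longrightarrow> x m n = undefined)}"

definition prange :: "((nat \<Rightarrow> nat) \<Rightarrow> (nat \<Rightarrow> nat) \<Rightarrow> 'a) \<Rightarrow> 'a" where
  "prange x = x vzero vzero"

definition cylinder :: "nat \<Rightarrow> 'a kgraph \<Rightarrow> 'a \<Rightarrow> ((nat \<Rightarrow> nat) \<Rightarrow> (nat \<Rightarrow> nat) \<Rightarrow> 'a) set" where
  "cylinder k G l = {x \<in> infpaths k G. x vzero (dg G l) = l}"

definition cylinder_topology :: "nat \<Rightarrow> 'a kgraph \<Rightarrow> ((nat \<Rightarrow> nat) \<Rightarrow> (nat \<Rightarrow> nat) \<Rightarrow> 'a) topology" where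
  "cylinder_topology k G = topology_generated_by {cylinder k G l | l. l \<in> mor G}"

text \<open>Degree of a finite Bratteli path of length n: its j-th edge (j = 1..n) has degree
  e_i with i = j mod k in {1..k}, i.e. 0-indexed coordinate (j-1) mod k.\<close>
definition bdeg :: "nat \<Rightarrow> nat \<Rightarrow> nat \<Rightarrow> nat" where
  "bdeg k n = (\<lambda>i. if i < k then n div k + (if i < n mod k then 1 else 0) else 0)"

text \<open>the initial segment of length n of the Bratteli path corresponding to x\<close>
definition bseg :: "nat \<Rightarrow> ((nat \<Rightarrow> nat) \<Rightarrow> (nat \<Rightarrow> nat) \<Rightarrow> 'a) \<Rightarrow> nat \<Rightarrow> 'a" where
  "bseg k x n = x vzero (bdeg k n)"

definition pmeet :: "nat \<Rightarrow> ((nat \<Rightarrow> nat) \<Rightarrow> (nat \<Rightarrow> nat) \<Rightarrow> 'a)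
     \<Rightarrow> ((nat \<Rightarrow> nat) \<Rightarrow> (nat \<Rightarrow> nat) \<Rightarrow> 'a) \<Rightarrow> 'a" where
  "pmeet k x z = bseg k x (GREATEST n. bseg k x n = bseg k z n)"

text \<open>d_{y,theta} is only meaningful on the infinite path space; off it we set it to 0
  so that it is a total symmetric nonnegative function (as required by Metric_space).\<close>
definition dyt :: "nat \<Rightarrow> 'a kgraph \<Rightarrow> ('a \<Rightarrow> real) \<Rightarrow> real
     \<Rightarrow> ((nat \<Rightarrow> nat) \<Rightarrow> (nat \<Rightarrow> nat) \<Rightarrow> 'a) \<Rightarrow> ((nat \<Rightarrow> nat) \<Rightarrow> (nat \<Rightarrow> nat) \<Rightarrow> 'a) \<Rightarrow> real" where
  "dyt k G y \<theta> x z =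
     (if x \<notin> infpaths k G \<or> z \<notin> infpaths k G then 0
      else if prange x \<noteq> prange z then 1 else if x = z then 0 else wyt k G y \<theta> (pmeet k x z))"

definition is_ultrametric :: "'b set \<Rightarrow> ('b \<Rightarrow> 'b \<Rightarrow> real) \<Rightarrow> bool" where
  "is_ultrametric S D \<longleftrightarrow> Metric_space S D \<and>
     (\<forall>x\<in>S. \<forall>z\<in>S. \<forall>u\<in>S. D x z \<le> max (D x u) (D u z))"

end

theory Submission
  imports Defs
begin

lemma ex1_uniq: "\<exists>!p. P p \<Longrightarrow> P a \<Longrightarrow> P b \<Longrightarrow> a = b" by blast

locale kg =
  fixes k :: nat and G :: "'a kgraph"
  assumes kg: "is_kgraph k G" and fin: "finite_kgraph k G" and sc: "strongly_connected G"
begin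

lemmas K = kg[unfolded is_kgraph_def]
lemma kpos: "0 < k" using K by (rule conjunct1)
lemma dg_kvec: "l \<in> mor G \<Longrightarrow> kvec k (dg G l)"
  using K[THEN conjunct2, THEN conjunct2, THEN conjunct1] by blast
lemma rg_V: "l \<in> mor G \<Longrightarrow> rg G l \<in> vertices G"
  using K[THEN conjunct2, THEN conjunct2, THEN conjunct2, THEN conjunct1] by blast
lemma sr_V: "l \<in> mor G \<Longrightarrow> sr G l \<in> vertices G"
  using K[THEN conjunct2, THEN conjunct2, THEN conjunct2, THEN conjunct1] by blast
lemma V_mor: "v \<in> vertices G \<Longrightarrow> v \<in> mor G" by (simp add: vertices_def)
lemma V_dg: "v \<in> vertices G \<Longrightarrow> dg G v = vzero" by (simp add: vertices_def)
lemma V_rg: "v \<in> vertices G \<Longrightarrow> rg G v = v"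
  using K[THEN conjunct2, THEN conjunct2, THEN conjunct2, THEN conjunct2, THEN conjunct1] by blast
lemma V_sr: "v \<in> vertices G \<Longrightarrow> sr G v = v"
  using K[THEN conjunct2, THEN conjunct2, THEN conjunct2, THEN conjunct2, THEN conjunct1] by blast
lemma cmp_rg_id: "l \<in> mor G \<Longrightarrow> cmp G (rg G l) l = l"
  using K[THEN conjunct2, THEN conjunct2, THEN conjunct2, THEN conjunct2, THEN conjunct2, THEN conjunct1] by blast
lemma cmp_sr_id: "l \<in> mor G \<Longrightarrow> cmp G l (sr G l) = l"
  using K[THEN conjunct2, THEN conjunct2, THEN conjunct2, THEN conjunct2, THEN conjunct2, THEN conjunct1] by blast
lemma cmp_props:
  assumes "l \<in> mor G" "n \<in> mor G" "sr G l = rg G n"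
  shows "cmp G l n \<in> mor G" "rg G (cmp G l n) = rg G l" "sr G (cmp G l n) = sr G n"
    "dg G (cmp G l n) = vadd (dg G l) (dg G n)"
  using K[THEN conjunct2, THEN conjunct2, THEN conjunct2, THEN conjunct2, THEN conjunct2, THEN conjunct2, THEN conjunct1] assms by blast+
lemma cmp_assoc:
  assumes "l \<in> mor G" "n \<in> mor G" "p \<in> mor G" "sr G l = rg G n" "sr G n = rg G p"
  shows "cmp G (cmp G l n) p = cmp G l (cmp G n p)"
  using K[THEN conjunct2, THEN conjunct2, THEN conjunct2, THEN conjunct2, THEN conjunct2, THEN conjunct2, THEN conjunct2, THEN conjunct1] assms by blast

lemma fact_ex1:
  assumes "l \<in> mor G" "kvec k m" "kvec k n" "dg G l = vadd m n"
  shows "\<exists>!(e, f). e \<in> mor G \<and> f \<in> mor G \<and> sr G e = rg G f \<and> l = cmp G e f \<and>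
                   dg G e = m \<and> dg G f = n"
  using K[THEN conjunct2, THEN conjunct2, THEN conjunct2, THEN conjunct2, THEN conjunct2, THEN conjunct2, THEN conjunct2, THEN conjunct2, rule_format, OF assms(1)]
    assms(2-4) by simp

lemma fact_ex:
  assumes "l \<in> mor G" "kvec k m" "kvec k n" "dg G l = vadd m n"
  obtains e f where "e \<in> mor G" "f \<in> mor G" "sr G e = rg G f" "l = cmp G e f"
    "dg G e = m" "dg G f = n"
proof -
  obtain p where "case p of (e, f) \<Rightarrow> e \<in> mor G \<and> f \<in> mor G \<and> sr G e = rg G f \<and> l = cmp G e f \<and>
                   dg G e = m \<and> dg G f = n" using fact_ex1[OF assms] by (rule ex1E)
  then show ?thesis using that by (cases p) auto
qed

lemma fact_uniq:
  assumes "e \<in> mor G" "f \<in> mor G" "sr G e = rg G f"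
    "e' \<in> mor G" "f' \<in> mor G" "sr G e' = rg G f'"
    "cmp G e f = cmp G e' f'" "dg G e = dg G e'" "dg G f = dg G f'"
  shows "e = e' \<and> f = f'"
proof -
  have "cmp G e f \<in> mor G" "dg G (cmp G e f) = vadd (dg G e) (dg G f)"
    using cmp_props assms by auto
  note u = ex1_uniq[OF fact_ex1[OF this(1) dg_kvec[OF assms(1)] dg_kvec[OF assms(2)] this(2)], of "(e, f)" "(e', f')"]
  have "(e, f) = (e', f')" by (rule u) (use assms in simp_all)
  then show ?thesis by simp
qed

lemma finite_V: "finite (vertices G)"
proof -
  have "vertices G \<subseteq> {l \<in> mor G. dg G l = vzero}" by (auto simp: vertices_def)
  moreover have "finite {l \<in> mor G. dg G l = vzero}" using fin by (simp add: finite_kgraph_def)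
  ultimately show ?thesis by (rule finite_subset)
qed

lemma finite_deg: "finite {l \<in> mor G. dg G l = n}" using fin by (simp add: finite_kgraph_def)

definition sz :: "'a \<Rightarrow> nat" where "sz l = (\<Sum>i<k. dg G l i)"

lemma sz0_vertex: assumes "l \<in> mor G" "sz l = 0" shows "l \<in> vertices G"
proof -
  have "dg G l = vzero"
  proof
    fix i show "dg G l i = vzero i"
    proof (cases "i < k")
      case True then show ?thesis using assms by (simp add: sz_def vzero_def)
    next
      case False then show ?thesis using dg_kvec[OF assms(1)] by (simp add: kvec_def vzero_def)
    qed
  qed
  then show ?thesis using assms by (simp add: vertices_def)
qed

lemma kvec_ebas: "i < k \<Longrightarrow> kvec k (ebas i)" by (simp add: kvec_def ebas_def)

lemma split_front:
  assumes "l \<in> mor G" "i < k" "dg G l i > 0"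
  obtains e l' where "e \<in> mor G" "l' \<in> mor G" "sr G e = rg G l'" "l = cmp G e l'"
    "dg G e = ebas i" "dg G l' = (\<lambda>j. dg G l j - ebas i j)"
    "rg G e = rg G l" "sr G l' = sr G l" "sz l' < sz l" "dg G l' i = dg G l i - 1"
proof -
  let ?n = "(\<lambda>j. dg G l j - ebas i j)"
  have kn: "kvec k ?n" using dg_kvec[OF assms(1)] by (simp add: kvec_def)
  have dd: "dg G l = vadd (ebas i) ?n" unfolding vadd_def ebas_def
  proof
    fix j show "dg G l j = (if j = i then 1 else 0) + (dg G l j - (if j = i then 1 else 0))"
      using assms(3) by (cases "j = i") auto
  qed
  obtain e l' where el: "e \<in> mor G" "l' \<in> mor G" "sr G e = rg G l'" "l = cmp G e l'"
    "dg G e = ebas i" "dg G l' = ?n"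
    using fact_ex[OF assms(1) kvec_ebas[OF assms(2)] kn dd] by blast
  have r1: "rg G e = rg G l" "sr G l' = sr G l" using cmp_props[OF el(1-3)] el(4) by simp_all
  have r2: "sz l' < sz l"
  proof -
    have "sz l = (\<Sum>j<k. ebas i j + dg G l' j)" unfolding sz_def
      by (rule sum.cong) (auto simp: el(6) ebas_def assms(3))
    also have "\<dots> = 1 + sz l'" using assms(2) by (simp add: sum.distrib sz_def ebas_def)
    finally show ?thesis by simp
  qed
  have r3: "dg G l' i = dg G l i - 1" using el(6) by (simp add: ebas_def)
  show ?thesis by (rule that[OF el r1 r2 r3])
qed

lemma prop_path:
  assumes step: "\<And>e i. e \<in> mor G \<Longrightarrow> i < k \<Longrightarrow> dg G e = ebas i \<Longrightarrow> P (rg G e) \<Longrightarrow> P (sr G e)"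
  shows "l \<in> mor G \<Longrightarrow> P (rg G l) \<Longrightarrow> P (sr G l)"
proof (induction "sz l" arbitrary: l rule: less_induct)
  case less
  show ?case
  proof (cases "sz l = 0")
    case True
    then have "l \<in> vertices G" using sz0_vertex less.prems by blast
    then show ?thesis using less.prems V_rg V_sr by metis
  next
    case False
    then obtain i where i: "i < k" "dg G l i > 0" by (auto simp: sz_def)
    obtain e l' where el: "e \<in> mor G" "l' \<in> mor G" "sr G e = rg G l'" "l = cmp G e l'"
      "dg G e = ebas i" "rg G e = rg G l" "sr G l' = sr G l" "sz l' < sz l"
      by (rule split_front[OF less.prems(1) i]) blast
    have "P (sr G e)" using step[OF el(1) i(1) el(5)] less.prems(2) el(6) by simp
    then have "P (sr G l')" using less.hyps[OF el(8) el(2)] el(3) by simp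
    then show ?thesis using el(7) by simp
  qed
qed

lemma prop_all:
  assumes step: "\<And>e i. e \<in> mor G \<Longrightarrow> i < k \<Longrightarrow> dg G e = ebas i \<Longrightarrow> P (rg G e) \<Longrightarrow> P (sr G e)"
    and "v \<in> vertices G" "P v" "w \<in> vertices G"
  shows "P w"
proof -
  obtain l where "l \<in> mor G" "rg G l = v" "sr G l = w"
    using sc assms(2,4) unfolding strongly_connected_def by blast
  note lfacts = this
  have "P (sr G l)"
  proof (rule prop_path[where P=P])
    show "\<And>e i. e \<in> mor G \<Longrightarrow> i < k \<Longrightarrow> dg G e = ebas i \<Longrightarrow> P (rg G e) \<Longrightarrow> P (sr G e)"
      by (rule step)
  qed (use lfacts assms(3) in auto)
  then show ?thesis using lfacts by simp
qed

end

definition mv :: "'v set \<Rightarrow> ('v \<Rightarrow> 'v \<Rightarrow> real) \<Rightarrow> ('v \<Rightarrow> real) \<Rightarrow> 'v \<Rightarrow> real" where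
  "mv V a x p = (\<Sum>q\<in>V. a p q * x q)"

definition irred :: "'v set \<Rightarrow> ('v \<Rightarrow> 'v \<Rightarrow> real) \<Rightarrow> bool" where
  "irred V a \<longleftrightarrow> (\<forall>P. (\<forall>p\<in>V. \<forall>q\<in>V. a p q > 0 \<longrightarrow> P p \<longrightarrow> P q) \<longrightarrow> (\<exists>p\<in>V. P p) \<longrightarrow> (\<forall>q\<in>V. P q))"

lemma irredD:
  assumes "irred V a" "\<And>p q. p \<in> V \<Longrightarrow> q \<in> V \<Longrightarrow> a p q > 0 \<Longrightarrow> P p \<Longrightarrow> P q"
    "p \<in> V" "P p" "q \<in> V"
  shows "P q"
  using assms unfolding irred_def by blast

lemma zero_propagate:
  assumes fin: "finite V" and nn: "\<And>p q. p \<in> V \<Longrightarrow> q \<in> V \<Longrightarrow> a p q \<ge> 0"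
    and u: "\<And>p. p \<in> V \<Longrightarrow> u p \<ge> 0"
    and p: "p \<in> V" "q \<in> V" "a p q > 0" "u p = 0" "mv V a u p = 0"
  shows "u q = 0"
proof -
  have "\<forall>q'\<in>V. a p q' * u q' = 0"
    using p(5) unfolding mv_def
    by (subst sum_nonneg_eq_0_iff[symmetric]) (use fin nn u p in auto)
  then have "a p q * u q = 0" using p by blast
  then show ?thesis using p(3) by simp
qed

lemma eig_simple:
  assumes fin: "finite V" and nn: "\<And>p q. p \<in> V \<Longrightarrow> q \<in> V \<Longrightarrow> a p q \<ge> 0"
    and irr: "irred V a"
    and zpos: "\<And>p. p \<in> V \<Longrightarrow> z p > 0"
    and ez: "\<And>p. p \<in> V \<Longrightarrow> mv V a z p = r * z p"
    and ev: "\<And>p. p \<in> V \<Longrightarrow> mv V a v p = r * v p"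
  shows "\<exists>t. \<forall>p\<in>V. v p = t * z p"
proof (cases "V = {}")
  case True then show ?thesis by simp
next
  case False
  define t where "t = Min ((\<lambda>p. v p / z p) ` V)"
  have "t \<in> (\<lambda>p. v p / z p) ` V" unfolding t_def using fin False by (intro Min_in) auto
  then obtain p0 where p0: "p0 \<in> V" "t = v p0 / z p0" by blast
  define u where "u p = v p - t * z p" for p
  have tle: "t \<le> v p / z p" if "p \<in> V" for p unfolding t_def using fin that by auto
  have u0: "u p \<ge> 0" if "p \<in> V" for p
    using tle[OF that] zpos[OF that] by (simp add: u_def field_simps)
  have up0: "u p0 = 0" using p0 zpos[OF p0(1)] by (simp add: u_def)
  have eu: "mv V a u p = r * u p" if "p \<in> V" for p
  proof -
    have "mv V a u p = mv V a v p - t * mv V a z p"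
      unfolding mv_def u_def by (simp add: algebra_simps sum_subtractf sum_distrib_left)
    then show ?thesis using ev[OF that] ez[OF that] by (simp add: u_def algebra_simps)
  qed
  have "u q = 0" if "q \<in> V" for q
  proof (rule irredD[where P="\<lambda>q. u q = 0" and V=V and a=a])
    fix p q assume "p \<in> V" "q \<in> V" "a p q > 0" "u p = 0"
    then show "u q = 0" using eu[of p] by (intro zero_propagate[of V a u p q]) (use fin nn u0 in auto)
  qed (use irr p0(1) up0 that in auto)
  then show ?thesis by (intro exI[of _ t]) (auto simp: u_def)
qed

lemma specrad_eq:
  assumes fin: "finite V" and ne: "V \<noteq> {}" and nn: "\<And>p q. p \<in> V \<Longrightarrow> q \<in> V \<Longrightarrow> a p q \<ge> 0"
    and zpos: "\<And>p. p \<in> V \<Longrightarrow> z p > 0"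
    and ez: "\<And>p. p \<in> V \<Longrightarrow> mv V a z p = c * z p"
  shows "specrad V a = c"
proof -
  let ?E = "{cmod e | e. \<exists>x :: _ \<Rightarrow> complex. (\<exists>p\<in>V. x p \<noteq> 0) \<and>
       (\<forall>p\<in>V. (\<Sum>q\<in>V. complex_of_real (a p q) * x q) = e * x p)}"
  obtain p1 where p1: "p1 \<in> V" using ne by blast
  have c0: "c \<ge> 0"
  proof -
    have "mv V a z p1 \<ge> 0" unfolding mv_def using nn zpos p1
      by (intro sum_nonneg) (simp add: less_imp_le)
    then show ?thesis using ez[OF p1] zpos[OF p1] by (simp add: zero_le_mult_iff)
  qed
  have cin: "c \<in> ?E"
  proof -
    have "(\<Sum>q\<in>V. complex_of_real (a p q) * complex_of_real (z q)) = complex_of_real c * complex_of_real (z p)"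
      if "p \<in> V" for p
    proof -
      have "(\<Sum>q\<in>V. complex_of_real (a p q) * complex_of_real (z q)) = complex_of_real (mv V a z p)"
        unfolding mv_def by simp
      then show ?thesis using ez[OF that] by simp
    qed
    moreover have "complex_of_real (z p1) \<noteq> 0" using zpos[OF p1] by simp
    ultimately have ex: "\<exists>x :: _ \<Rightarrow> complex. (\<exists>p\<in>V. x p \<noteq> 0) \<and>
       (\<forall>p\<in>V. (\<Sum>q\<in>V. complex_of_real (a p q) * x q) = complex_of_real c * x p)"
      using p1 by (intro exI[of _ "\<lambda>p. complex_of_real (z p)"]) blast
    have cm: "c = cmod (complex_of_real c)" using c0 by simp
    show ?thesis
      apply (rule CollectI)
      apply (rule exI[of _ "complex_of_real c"])
      apply (rule conjI[OF cm ex])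
      done
  qed
  have bound: "e \<le> c" if "e \<in> ?E" for e
  proof -
    obtain ev x where e: "e = cmod ev" and x: "\<exists>p\<in>V. x p \<noteq> 0"
      and eq: "\<And>p. p \<in> V \<Longrightarrow> (\<Sum>q\<in>V. complex_of_real (a p q) * x q) = ev * x p"
      using \<open>e \<in> ?E\<close> by blast
    define t where "t = Max ((\<lambda>p. cmod (x p) / z p) ` V)"
    have "t \<in> (\<lambda>p. cmod (x p) / z p) ` V" unfolding t_def using fin ne by (intro Max_in) auto
    then obtain p0 where p0: "p0 \<in> V" "t = cmod (x p0) / z p0" by blast
    have tge: "cmod (x p) \<le> t * z p" if "p \<in> V" for p
    proof -
      have "cmod (x p) / z p \<le> t" unfolding t_def using fin that by auto
      then show ?thesis using zpos[OF that] by (simp add: field_simps)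
    qed
    obtain p2 where p2: "p2 \<in> V" "x p2 \<noteq> 0" using x by blast
    have "0 < cmod (x p2) / z p2" using p2 zpos[OF p2(1)] by simp
    also have "\<dots> \<le> t" unfolding t_def using fin p2 by auto
    finally have tpos: "t > 0" .
    have xp0: "cmod (x p0) > 0" using tpos p0 zpos[OF p0(1)] by (simp add: field_simps)
    have "cmod ev * cmod (x p0) = cmod (\<Sum>q\<in>V. complex_of_real (a p0 q) * x q)"
      using eq[OF p0(1)] by (simp add: norm_mult)
    also have "\<dots> \<le> (\<Sum>q\<in>V. cmod (complex_of_real (a p0 q) * x q))" by (rule norm_sum)
    also have "\<dots> = (\<Sum>q\<in>V. a p0 q * cmod (x q))"
      by (rule sum.cong) (use nn p0 in \<open>auto simp: norm_mult\<close>)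
    also have "\<dots> \<le> (\<Sum>q\<in>V. a p0 q * (t * z q))"
      by (rule sum_mono, rule mult_left_mono[OF tge]) (use nn p0 in auto)
    also have "\<dots> = t * mv V a z p0" unfolding mv_def by (simp add: sum_distrib_left algebra_simps)
    also have "\<dots> = c * (t * z p0)" using ez[OF p0(1)] by simp
    also have "\<dots> = c * cmod (x p0)" using p0 zpos[OF p0(1)] by simp
    finally have "cmod ev * cmod (x p0) \<le> c * cmod (x p0)" .
    then show ?thesis using xp0 e by simp
  qed
  show ?thesis unfolding specrad_def
    by (rule cSup_eq_maximum[OF cin]) (use bound in blast)
qed


lemma bw_finite:
  fixes x :: "nat \<Rightarrow> 'v \<Rightarrow> real"
  assumes "finite V" "\<And>n p. p \<in> V \<Longrightarrow> \<bar>x n p\<bar> \<le> B"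
  shows "\<exists>\<sigma> z. strict_mono \<sigma> \<and> (\<forall>p\<in>V. (\<lambda>n. x (\<sigma> n) p) \<longlonglongrightarrow> z p)"
  using assms
proof (induction V rule: finite_induct)
  case empty
  show ?case by (intro exI[of _ id]) (auto simp: strict_mono_def)
next
  case (insert a V)
  have "\<exists>\<sigma> z. strict_mono \<sigma> \<and> (\<forall>p\<in>V. (\<lambda>n. x (\<sigma> n) p) \<longlonglongrightarrow> z p)"
    using insert.prems by (intro insert.IH) blast
  then obtain \<sigma> z where \<sigma>: "strict_mono \<sigma>" and conv: "\<forall>p\<in>V. (\<lambda>n. x (\<sigma> n) p) \<longlonglongrightarrow> z p"
    by blast
  obtain f where f: "strict_mono f" "monoseq (\<lambda>n. x (\<sigma> (f n)) a)"
    using seq_monosub[of "\<lambda>n. x (\<sigma> n) a"] by blast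
  have "Bseq (\<lambda>n. x (\<sigma> (f n)) a)"
    by (rule BseqI'[of _ B]) (use insert.prems in auto)
  then have "convergent (\<lambda>n. x (\<sigma> (f n)) a)" using f(2) by (rule Bseq_monoseq_convergent)
  then obtain l where l: "(\<lambda>n. x (\<sigma> (f n)) a) \<longlonglongrightarrow> l" by (auto simp: convergent_def)
  have "\<forall>p\<in>insert a V. (\<lambda>n. x ((\<sigma> \<circ> f) n) p) \<longlonglongrightarrow> (z(a := l)) p"
  proof
    fix p assume p: "p \<in> insert a V"
    show "(\<lambda>n. x ((\<sigma> \<circ> f) n) p) \<longlonglongrightarrow> (z(a := l)) p"
    proof (cases "p = a")
      case True then show ?thesis using l by simp
    next
      case False
      then have "p \<in> V" using p by simp
      then have "((\<lambda>n. x (\<sigma> n) p) \<circ> f) \<longlonglongrightarrow> z p"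
        using conv f(1) by (intro LIMSEQ_subseq_LIMSEQ) auto
      then show ?thesis using False by (simp add: comp_def)
    qed
  qed
  moreover have "strict_mono (\<sigma> \<circ> f)" using \<sigma> f(1) by (rule strict_mono_o)
  ultimately show ?case by blast
qed

definition Fop :: "'v set \<Rightarrow> ('v \<Rightarrow> 'v \<Rightarrow> real) \<Rightarrow> ('v \<Rightarrow> real) \<Rightarrow> 'v \<Rightarrow> real" where
  "Fop V a v = (\<lambda>p. v p + mv V a v p)"

lemma mv_lin: "mv V a (\<lambda>q. \<alpha> * f q + \<beta> * g q) p = \<alpha> * mv V a f p + \<beta> * mv V a g p"
  unfolding mv_def by (simp add: sum.distrib sum_distrib_left algebra_simps)

lemma Fpow_lin:
  "(Fop V a ^^ N) (\<lambda>p. \<alpha> * f p + \<beta> * g p) = (\<lambda>p. \<alpha> * (Fop V a ^^ N) f p + \<beta> * (Fop V a ^^ N) g p)"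
proof (induction N)
  case 0 then show ?case by simp
next
  case (Suc N)
  have "(Fop V a ^^ Suc N) (\<lambda>p. \<alpha> * f p + \<beta> * g p) =
     Fop V a (\<lambda>p. \<alpha> * (Fop V a ^^ N) f p + \<beta> * (Fop V a ^^ N) g p)"
    by (simp only: funpow.simps comp_apply Suc.IH)
  also have "\<dots> = (\<lambda>p. \<alpha> * Fop V a ((Fop V a ^^ N) f) p + \<beta> * Fop V a ((Fop V a ^^ N) g) p)"
    by (simp only: Fop_def mv_lin) (simp add: algebra_simps)
  finally show ?case by simp
qed

lemma mv_Fop: "mv V a (Fop V a v) = Fop V a (mv V a v)"
proof
  fix p
  have "mv V a (Fop V a v) p = mv V a (\<lambda>q. 1 * v q + 1 * mv V a v q) p"
    by (simp add: Fop_def)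
  also have "\<dots> = mv V a v p + mv V a (mv V a v) p" using mv_lin[of V a 1 v 1 "mv V a v" p] by simp
  finally show "mv V a (Fop V a v) p = Fop V a (mv V a v) p" by (simp add: Fop_def)
qed

lemma mv_Fpow: "mv V a ((Fop V a ^^ N) v) = (Fop V a ^^ N) (mv V a v)"
  by (induction N) (simp_all add: mv_Fop)

lemma mv_nonneg:
  assumes "finite V" "\<And>p q. p \<in> V \<Longrightarrow> q \<in> V \<Longrightarrow> a p q \<ge> 0" "\<And>q. q \<in> V \<Longrightarrow> v q \<ge> 0" "p \<in> V"
  shows "mv V a v p \<ge> 0"
  unfolding mv_def using assms by (intro sum_nonneg) simp

lemma Fpow_ge:
  assumes fin: "finite V" and nn: "\<And>p q. p \<in> V \<Longrightarrow> q \<in> V \<Longrightarrow> a p q \<ge> 0"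
    and v: "\<And>q. q \<in> V \<Longrightarrow> v q \<ge> 0"
  shows "p \<in> V \<Longrightarrow> (Fop V a ^^ N) v p \<ge> v p"
proof (induction N arbitrary: p)
  case 0 then show ?case by simp
next
  case (Suc N)
  have w: "\<And>q. q \<in> V \<Longrightarrow> (Fop V a ^^ N) v q \<ge> 0" using Suc.IH v by (meson order.trans)
  have "(Fop V a ^^ Suc N) v p = (Fop V a ^^ N) v p + mv V a ((Fop V a ^^ N) v) p"
    by (simp add: Fop_def)
  also have "\<dots> \<ge> (Fop V a ^^ N) v p" using mv_nonneg[of V a "(Fop V a ^^ N) v" p] fin nn w Suc.prems by simp
  finally show ?case using Suc.IH[OF Suc.prems] by simp
qed

lemma Fpow_pos:
  assumes fin: "finite V" and nn: "\<And>p q. p \<in> V \<Longrightarrow> q \<in> V \<Longrightarrow> a p q \<ge> 0"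
    and irr: "irred V a"
  shows "(\<forall>q\<in>V. v q \<ge> 0) \<Longrightarrow> (\<exists>p\<in>V. v p > 0) \<Longrightarrow> \<exists>N. \<forall>p\<in>V. (Fop V a ^^ N) v p > 0"
proof (induction "card {p\<in>V. v p = 0}" arbitrary: v rule: less_induct)
  case less
  show ?case
  proof (cases "{p\<in>V. v p = 0} = {}")
    case True
    then have "\<forall>p\<in>V. (Fop V a ^^ 0) v p > 0" using less.prems(1) by force
    then show ?thesis by blast
  next
    case False
    then obtain p0 where p0: "p0 \<in> V" "v p0 = 0" by blast
    define v' where "v' = Fop V a v"
    have v'ge: "v' q \<ge> v q" if "q \<in> V" for q
      unfolding v'_def Fop_def using mv_nonneg[of V a v q] fin nn that less.prems(1) by simp
    have sub: "{p\<in>V. v' p = 0} \<subseteq> {p\<in>V. v p = 0}"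
      using v'ge less.prems(1) by (force intro: antisym)
    have "\<exists>p\<in>V. v p = 0 \<and> v' p \<noteq> 0"
    proof (rule ccontr)
      assume "\<not> ?thesis"
      then have mz: "mv V a v p = 0" if "p \<in> V" "v p = 0" for p
        using that by (auto simp: v'_def Fop_def)
      have "\<forall>q\<in>V. v q = 0"
      proof
        fix q assume q: "q \<in> V"
        show "v q = 0"
        proof (rule irredD[where P="\<lambda>q. v q = 0" and V=V and a=a])
          fix p q assume "p \<in> V" "q \<in> V" "a p q > 0" "v p = 0"
          then show "v q = 0" using mz[of p]
            by (intro zero_propagate[of V a v p q]) (use fin nn less.prems(1) in auto)
        qed (use irr p0 q in auto)
      qed
      then show False using less.prems(2) by force
    qed
    then have psub: "{p\<in>V. v' p = 0} \<subset> {p\<in>V. v p = 0}" using sub by blast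
    have "card {p\<in>V. v' p = 0} < card {p\<in>V. v p = 0}"
      using psub fin by (intro psubset_card_mono) auto
    moreover have "\<forall>q\<in>V. v' q \<ge> 0" using v'ge less.prems(1) by (meson order.trans)
    moreover have "\<exists>p\<in>V. v' p > 0" using v'ge less.prems(2) by (meson order.strict_trans2)
    ultimately obtain N where N: "\<forall>p\<in>V. (Fop V a ^^ N) v' p > 0" using less.hyps by blast
    have "(Fop V a ^^ Suc N) v = (Fop V a ^^ N) v'" by (simp only: v'_def funpow_Suc_right comp_apply)
    then show ?thesis using N by metis
  qed
qed


lemma perron:
  assumes fin: "finite V" and ne: "V \<noteq> {}"
    and nn: "\<And>p q. p \<in> V \<Longrightarrow> q \<in> V \<Longrightarrow> a p q \<ge> 0" and irr: "irred V a"
  shows "\<exists>z r. (\<forall>p\<in>V. z p > 0) \<and> (\<forall>p\<in>V. mv V a z p = r * z p)"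
proof -
  define S where "S = {x :: _ \<Rightarrow> real. (\<forall>p\<in>V. x p \<ge> 0) \<and> (\<Sum>p\<in>V. x p) = 1}"
  define T where "T = {t. \<exists>x\<in>S. \<forall>p\<in>V. mv V a x p \<ge> t * x p}"
  define R where "R = (\<Sum>p\<in>V. \<Sum>q\<in>V. a p q)"
  have Tbound: "t \<le> R" if tT: "t \<in> T" for t
  proof -
    obtain x where x: "x \<in> S" "\<And>p. p \<in> V \<Longrightarrow> mv V a x p \<ge> t * x p"
      using tT unfolding T_def by blast
    define m where "m = Max (x ` V)"
    have "m \<in> x ` V" unfolding m_def using fin ne by (intro Max_in) auto
    then obtain p where p: "p \<in> V" "x p = m" by blast
    have xle: "x q \<le> m" if "q \<in> V" for q unfolding m_def using fin that by auto
    have "1 = (\<Sum>q\<in>V. x q)" using x(1) by (simp add: S_def)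
    also have "\<dots> \<le> (\<Sum>q\<in>V. m)" by (rule sum_mono) (rule xle)
    also have "\<dots> = real (card V) * m" by simp
    finally have "0 < real (card V) * m" by simp
    then have mpos: "m > 0" by (simp add: zero_less_mult_iff)
    have "t * m \<le> mv V a x p" using x(2)[OF p(1)] p(2) by simp
    also have "\<dots> \<le> (\<Sum>q\<in>V. a p q * m)" unfolding mv_def
      by (rule sum_mono) (use nn p xle in \<open>auto intro: mult_left_mono\<close>)
    also have "\<dots> = (\<Sum>q\<in>V. a p q) * m" by (simp add: sum_distrib_right)
    also have "\<dots> \<le> R * m"
    proof -
      have "(\<Sum>q\<in>V. a p q) \<le> R" unfolding R_def
        by (rule member_le_sum[where f="\<lambda>p. \<Sum>q\<in>V. a p q"]) (use fin p nn in \<open>auto intro: sum_nonneg\<close>)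
      then show ?thesis using mpos by simp
    qed
    finally show ?thesis using mpos by simp
  qed
  have T0: "0 \<in> T"
  proof -
    define x where "x = (\<lambda>p::'a. 1 / real (card V))"
    have "x \<in> S" unfolding S_def x_def using fin ne by auto
    moreover have "\<forall>p\<in>V. mv V a x p \<ge> 0 * x p"
      using mv_nonneg[of V a x] fin nn by (simp add: x_def)
    ultimately show ?thesis unfolding T_def by blast
  qed
  have bdd: "bdd_above T" by (rule bdd_aboveI[of _ R]) (rule Tbound)
  define r where "r = Sup T"
  have tle: "t \<le> r" if "t \<in> T" for t unfolding r_def using bdd that by (rule cSup_upper[rotated])
  have "\<forall>n::nat. \<exists>t x. x \<in> S \<and> (\<forall>p\<in>V. mv V a x p \<ge> t * x p) \<and> r - 1 / (real n + 1) < t \<and> t \<le> r"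
  proof
    fix n :: nat
    have "r - 1 / (real n + 1) < Sup T" unfolding r_def by simp
    then have "\<exists>t\<in>T. r - 1 / (real n + 1) < t"
      using less_cSup_iff[of T "r - 1 / (real n + 1)"] T0 bdd by blast
    then obtain t where t: "t \<in> T" "r - 1 / (real n + 1) < t" by blast
    then show "\<exists>t x. x \<in> S \<and> (\<forall>p\<in>V. mv V a x p \<ge> t * x p) \<and> r - 1 / (real n + 1) < t \<and> t \<le> r"
      using tle[OF t(1)] unfolding T_def by blast
  qed
  then obtain tt xx where H: "\<And>n. xx n \<in> S" "\<And>n p. p \<in> V \<Longrightarrow> mv V a (xx n) p \<ge> tt n * xx n p"
    "\<And>n. r - 1 / (real n + 1) < tt n" "\<And>n. tt n \<le> r"
    by metis
  have xxb: "\<bar>xx n p\<bar> \<le> 1" if "p \<in> V" for n p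
  proof -
    have "xx n p \<ge> 0" using H(1)[of n] that by (simp add: S_def)
    moreover have "xx n p \<le> (\<Sum>q\<in>V. xx n q)"
      by (rule member_le_sum) (use H(1)[of n] that fin in \<open>auto simp: S_def\<close>)
    ultimately show ?thesis using H(1)[of n] by (simp add: S_def)
  qed
  obtain \<sigma> z where \<sigma>: "strict_mono \<sigma>" and conv: "\<forall>p\<in>V. (\<lambda>n. xx (\<sigma> n) p) \<longlonglongrightarrow> z p"
    using bw_finite[where V=V and x=xx and B=1] fin xxb by blast
  have ttconv: "(\<lambda>n. tt (\<sigma> n)) \<longlonglongrightarrow> r"
  proof (rule tendsto_sandwich[of "\<lambda>n. r - 1 / (real n + 1)" _ _ "\<lambda>n. r"])
    show "\<forall>\<^sub>F n in sequentially. r - 1 / (real n + 1) \<le> tt (\<sigma> n)"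
    proof (rule always_eventually, rule allI)
      fix n
      have "real n \<le> real (\<sigma> n)" using seq_suble[OF \<sigma>] by simp
      then have "1 / (real (\<sigma> n) + 1) \<le> 1 / (real n + 1)" by (intro divide_left_mono) auto
      then show "r - 1 / (real n + 1) \<le> tt (\<sigma> n)" using H(3)[of "\<sigma> n"] by linarith
    qed
    show "\<forall>\<^sub>F n in sequentially. tt (\<sigma> n) \<le> r" using H(4) by simp
    show "(\<lambda>n. r - 1 / (real n + 1)) \<longlonglongrightarrow> r"
    proof -
      have "(\<lambda>n. inverse (real (Suc n))) \<longlonglongrightarrow> 0" by (rule LIMSEQ_inverse_real_of_nat)
      then have "(\<lambda>n. 1 / (real n + 1)) \<longlonglongrightarrow> 0" by (simp add: inverse_eq_divide add.commute)
      then have "(\<lambda>n. r - 1 / (real n + 1)) \<longlonglongrightarrow> r - 0" by (intro tendsto_diff) auto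
      then show ?thesis by simp
    qed
  qed simp
  have zS: "z \<in> S"
  proof -
    have "z p \<ge> 0" if "p \<in> V" for p
      using conv that H(1) by (intro LIMSEQ_le_const[of "\<lambda>n. xx (\<sigma> n) p"]) (auto simp: S_def)
    moreover have "(\<lambda>n. \<Sum>p\<in>V. xx (\<sigma> n) p) \<longlonglongrightarrow> (\<Sum>p\<in>V. z p)"
      using conv by (intro tendsto_sum) auto
    then have "(\<Sum>p\<in>V. z p) = 1" using H(1) by (simp add: S_def LIMSEQ_const_iff)
    ultimately show ?thesis by (simp add: S_def)
  qed
  have zge: "mv V a z p \<ge> r * z p" if p: "p \<in> V" for p
  proof -
    have "(\<lambda>n. mv V a (xx (\<sigma> n)) p - tt (\<sigma> n) * xx (\<sigma> n) p) \<longlonglongrightarrow> mv V a z p - r * z p"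
      unfolding mv_def using conv p ttconv
      by (intro tendsto_diff tendsto_sum tendsto_mult tendsto_const) auto
    moreover have "\<forall>n. 0 \<le> mv V a (xx (\<sigma> n)) p - tt (\<sigma> n) * xx (\<sigma> n) p" using H(2)[OF p] by simp
    ultimately have "0 \<le> mv V a z p - r * z p" by (intro LIMSEQ_le_const) auto
    then show ?thesis by simp
  qed
  have zeq: "mv V a z p = r * z p" if p: "p \<in> V" for p
  proof (rule ccontr)
    assume "mv V a z p \<noteq> r * z p"
    then have wpos: "\<exists>p\<in>V. mv V a z p - r * z p > 0" using zge[OF p] p by force
    define w where "w = (\<lambda>p. 1 * mv V a z p + (- r) * z p)"
    have w0: "\<forall>q\<in>V. w q \<ge> 0" using zge by (simp add: w_def)
    have "\<exists>p\<in>V. w p > 0" using wpos by (simp add: w_def)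
    then obtain N where N: "\<forall>p\<in>V. (Fop V a ^^ N) w p > 0"
      using Fpow_pos[OF fin nn irr] w0 by blast
    define u where "u = (Fop V a ^^ N) z"
    have z0: "\<And>q. q \<in> V \<Longrightarrow> z q \<ge> 0" using zS by (simp add: S_def)
    have uge: "u q \<ge> z q" if "q \<in> V" for q unfolding u_def using Fpow_ge[of V a z q N] fin nn z0 that by blast
    have gap: "mv V a u q - r * u q = (Fop V a ^^ N) w q" for q
    proof -
      have "(Fop V a ^^ N) w = (\<lambda>p. 1 * (Fop V a ^^ N) (mv V a z) p + (- r) * (Fop V a ^^ N) z p)"
        unfolding w_def by (rule Fpow_lin)
      then show ?thesis by (simp add: u_def mv_Fpow)
    qed
    define \<delta> where "\<delta> = Min ((\<lambda>p. (Fop V a ^^ N) w p / (1 + u p)) ` V)"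
    have up0: "u q \<ge> 0" if "q \<in> V" for q using uge z0 that by (meson order.trans)
    have "\<delta> \<in> (\<lambda>p. (Fop V a ^^ N) w p / (1 + u p)) ` V" unfolding \<delta>_def using fin ne by (intro Min_in) auto
    then obtain p1 where "p1 \<in> V" "\<delta> = (Fop V a ^^ N) w p1 / (1 + u p1)" by blast
    then have dpos: "\<delta> > 0" using N up0[of p1] by (simp add: add_pos_nonneg)
    have ineq: "mv V a u q \<ge> (r + \<delta>) * u q" if q: "q \<in> V" for q
    proof -
      have "\<delta> \<le> (Fop V a ^^ N) w q / (1 + u q)" unfolding \<delta>_def using fin q by auto
      then have "\<delta> * (1 + u q) \<le> (Fop V a ^^ N) w q" using up0[OF q]
        by (simp add: field_simps add_pos_nonneg)
      moreover have "\<delta> * u q \<le> \<delta> * (1 + u q)" using dpos by simp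
      ultimately show ?thesis using gap[of q] by (simp add: algebra_simps)
    qed
    define s where "s = (\<Sum>q\<in>V. u q)"
    have "s \<ge> (\<Sum>q\<in>V. z q)" unfolding s_def by (rule sum_mono) (rule uge)
    then have s1: "s \<ge> 1" using zS by (simp add: S_def)
    define x' where "x' = (\<lambda>q. u q / s)"
    have "x' \<in> S" unfolding S_def x'_def using s1 up0 by (simp add: sum_divide_distrib[symmetric] s_def)
    moreover have "\<forall>q\<in>V. mv V a x' q \<ge> (r + \<delta>) * x' q"
    proof
      fix q assume q: "q \<in> V"
      have "mv V a x' q = mv V a u q / s" unfolding mv_def x'_def by (simp add: sum_divide_distrib)
      also have "\<dots> \<ge> (r + \<delta>) * u q / s" using ineq[OF q] s1 by (simp add: divide_right_mono)
      finally show "mv V a x' q \<ge> (r + \<delta>) * x' q" by (simp add: x'_def)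
    qed
    ultimately have "r + \<delta> \<in> T" unfolding T_def by blast
    then show False using tle dpos by fastforce
  qed
  have zpos: "z p > 0" if p: "p \<in> V" for p
  proof (rule ccontr)
    assume "\<not> z p > 0"
    then have zp: "z p = 0" using zS p by (force simp: S_def)
    have "z q = 0" if q: "q \<in> V" for q
    proof (rule irredD[where P="\<lambda>q. z q = 0" and V=V and a=a])
      fix p q assume "p \<in> V" "q \<in> V" "a p q > 0" "z p = 0"
      then show "z q = 0" using zeq[of p]
        by (intro zero_propagate[of V a z p q]) (use fin nn zS in \<open>auto simp: S_def\<close>)
    qed (use irr p zp q in auto)
    then have "(\<Sum>q\<in>V. z q) = 0" by simp
    then show False using zS by (simp add: S_def)
  qed
  show ?thesis using zpos zeq by blast
qed


locale kgy = kg k G for k :: nat and G :: "'a kgraph" +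
  fixes y :: "'a \<Rightarrow> real" and \<theta> :: real
  assumes Rp: "Rplus_functor G y" and th: "0 < \<theta>"
begin

lemma y_cmp: "l \<in> mor G \<Longrightarrow> n \<in> mor G \<Longrightarrow> sr G l = rg G n \<Longrightarrow> y (cmp G l n) = y l + y n"
  using Rp unfolding Rplus_functor_def by blast
lemma y_V: "v \<in> vertices G \<Longrightarrow> y v = 0"
  using Rp unfolding Rplus_functor_def by blast
lemma y_nn: "l \<in> mor G \<Longrightarrow> y l \<ge> 0"
  using Rp unfolding Rplus_functor_def by blast

definition ES where "ES i p r = {l \<in> mor G. dg G l = ebas i \<and> rg G l = p \<and> sr G l = r}"

lemma ES_fin: "finite (ES i p r)"
  by (rule finite_subset[OF _ finite_deg[of "ebas i"]]) (auto simp: ES_def)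

lemma Bmat_ES: "Bmat G y \<theta> i p r = (\<Sum>l\<in>ES i p r. exp (- \<theta> * y l))"
  by (simp add: Bmat_def ES_def)

lemma Bnn: "Bmat G y \<theta> i p q \<ge> 0"
  unfolding Bmat_ES by (intro sum_nonneg) simp

lemma edge_le:
  assumes "e \<in> mor G" "dg G e = ebas i"
  shows "exp (- \<theta> * y e) \<le> Bmat G y \<theta> i (rg G e) (sr G e)"
  unfolding Bmat_ES by (rule member_le_sum) (use assms ES_fin in \<open>auto simp: ES_def\<close>)

lemma edge_pos:
  assumes "e \<in> mor G" "dg G e = ebas i"
  shows "Bmat G y \<theta> i (rg G e) (sr G e) > 0"
  using edge_le[OF assms] by (meson exp_gt_zero order.strict_trans2)

lemma Bprod:
  assumes i: "i < k" and j: "j < k"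
  shows "(\<Sum>r\<in>vertices G. Bmat G y \<theta> i p r * Bmat G y \<theta> j r q) =
         (\<Sum>l\<in>{l \<in> mor G. dg G l = vadd (ebas i) (ebas j) \<and> rg G l = p \<and> sr G l = q}. exp (- \<theta> * y l))"
proof -
  define Q where "Q = (\<Union>r\<in>vertices G. ES i p r \<times> ES j r q)"
  define P where "P = {l \<in> mor G. dg G l = vadd (ebas i) (ebas j) \<and> rg G l = p \<and> sr G l = q}"
  have "(\<Sum>r\<in>vertices G. Bmat G y \<theta> i p r * Bmat G y \<theta> j r q) =
        (\<Sum>r\<in>vertices G. \<Sum>ef\<in>ES i p r \<times> ES j r q. exp (- \<theta> * y (fst ef)) * exp (- \<theta> * y (snd ef)))"
    unfolding Bmat_ES sum_product sum.cartesian_product by (simp add: case_prod_beta)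
  also have "\<dots> = (\<Sum>ef\<in>Q. exp (- \<theta> * y (fst ef)) * exp (- \<theta> * y (snd ef)))"
    unfolding Q_def
    apply (rule sum.UNION_disjoint[symmetric])
      apply (rule finite_V)
     apply (simp add: ES_fin)
    apply (auto simp: ES_def)
    done
  also have "\<dots> = (\<Sum>ef\<in>Q. exp (- \<theta> * y (cmp G (fst ef) (snd ef))))"
  proof (rule sum.cong)
    fix ef assume "ef \<in> Q"
    then have "fst ef \<in> mor G" "snd ef \<in> mor G" "sr G (fst ef) = rg G (snd ef)"
      by (auto simp: Q_def ES_def)
    then show "exp (- \<theta> * y (fst ef)) * exp (- \<theta> * y (snd ef)) = exp (- \<theta> * y (cmp G (fst ef) (snd ef)))"
      by (simp add: y_cmp exp_add[symmetric] algebra_simps)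
  qed simp
  also have "\<dots> = (\<Sum>l\<in>P. exp (- \<theta> * y l))"
  proof (rule sum.reindex_bij_betw)
    show "bij_betw (\<lambda>ef. cmp G (fst ef) (snd ef)) Q P"
    proof (rule bij_betwI')
      fix a b assume aQ: "a \<in> Q" and bQ: "b \<in> Q"
      have a: "fst a \<in> mor G" "snd a \<in> mor G" "sr G (fst a) = rg G (snd a)"
        "dg G (fst a) = ebas i" "dg G (snd a) = ebas j"
        using aQ by (auto simp: Q_def ES_def)
      have b: "fst b \<in> mor G" "snd b \<in> mor G" "sr G (fst b) = rg G (snd b)"
        "dg G (fst b) = ebas i" "dg G (snd b) = ebas j"
        using bQ by (auto simp: Q_def ES_def)
      show "(cmp G (fst a) (snd a) = cmp G (fst b) (snd b)) = (a = b)"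
      proof
        assume eq: "cmp G (fst a) (snd a) = cmp G (fst b) (snd b)"
        have "fst a = fst b \<and> snd a = snd b"
          by (rule fact_uniq[OF a(1-3) b(1-3) eq]) (simp_all add: a b)
        then show "a = b" by (simp add: prod_eq_iff)
      qed simp
    next
      fix a assume "a \<in> Q"
      then have a: "fst a \<in> mor G" "snd a \<in> mor G" "sr G (fst a) = rg G (snd a)"
        "dg G (fst a) = ebas i" "dg G (snd a) = ebas j" "rg G (fst a) = p" "sr G (snd a) = q"
        by (auto simp: Q_def ES_def)
      show "cmp G (fst a) (snd a) \<in> P" using cmp_props[OF a(1-3)] a(4-7) by (simp add: P_def)
    next
      fix l assume "l \<in> P"
      then have l: "l \<in> mor G" "dg G l = vadd (ebas i) (ebas j)" "rg G l = p" "sr G l = q"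
        by (auto simp: P_def)
      obtain e f where ef: "e \<in> mor G" "f \<in> mor G" "sr G e = rg G f" "l = cmp G e f"
        "dg G e = ebas i" "dg G f = ebas j"
        using fact_ex[OF l(1) kvec_ebas[OF i] kvec_ebas[OF j] l(2)] by blast
      have "rg G e = p" "sr G f = q" using cmp_props[OF ef(1-3)] ef(4) l(3,4) by simp_all
      then have "(e, f) \<in> ES i p (sr G e) \<times> ES j (sr G e) q" using ef by (simp add: ES_def)
      then have "(e, f) \<in> Q" unfolding Q_def using sr_V[OF ef(1)] by blast
      then show "\<exists>a\<in>Q. l = cmp G (fst a) (snd a)" using ef(4) by (intro bexI[of _ "(e, f)"]) simp_all
    qed
  qed
  finally show ?thesis unfolding P_def .
qed

lemma Bcomm:
  assumes i: "i < k" and j: "j < k"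
  shows "(\<Sum>r\<in>vertices G. Bmat G y \<theta> i p r * Bmat G y \<theta> j r q) =
         (\<Sum>r\<in>vertices G. Bmat G y \<theta> j p r * Bmat G y \<theta> i r q)"
  unfolding Bprod[OF i j] Bprod[OF j i] by (simp add: vadd_def add.commute)

lemma mv_comm:
  assumes i: "i < k" and j: "j < k"
  shows "mv (vertices G) (Bmat G y \<theta> i) (mv (vertices G) (Bmat G y \<theta> j) v) p =
         mv (vertices G) (Bmat G y \<theta> j) (mv (vertices G) (Bmat G y \<theta> i) v) p"
proof -
  have *: "mv (vertices G) (Bmat G y \<theta> i) (mv (vertices G) (Bmat G y \<theta> j) v) p =
    (\<Sum>q\<in>vertices G. (\<Sum>r\<in>vertices G. Bmat G y \<theta> i p r * Bmat G y \<theta> j r q) * v q)" for i j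
    unfolding mv_def sum_distrib_left sum_distrib_right
    by (subst sum.swap) (simp add: algebra_simps)
  show ?thesis unfolding * Bcomm[OF i j] ..
qed

definition Am where "Am p q = (\<Sum>i<k. Bmat G y \<theta> i p q)"

lemma Am_nn: "Am p q \<ge> 0" unfolding Am_def by (intro sum_nonneg) (simp add: Bnn)

lemma mv_Am: "mv (vertices G) Am v p = (\<Sum>i<k. mv (vertices G) (Bmat G y \<theta> i) v p)"
  unfolding mv_def Am_def sum_distrib_right by (rule sum.swap)

lemma Am_edge:
  assumes "e \<in> mor G" "i < k" "dg G e = ebas i"
  shows "Am (rg G e) (sr G e) > 0"
proof -
  have "Bmat G y \<theta> i (rg G e) (sr G e) \<le> Am (rg G e) (sr G e)"
    unfolding Am_def by (rule member_le_sum[where f="\<lambda>i. Bmat G y \<theta> i (rg G e) (sr G e)"]) (use assms Bnn in auto)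
  then show ?thesis using edge_pos[OF assms(1,3)] by simp
qed

lemma Am_irred: "irred (vertices G) Am"
  unfolding irred_def
proof (intro allI impI ballI)
  fix P q
  assume cl: "\<forall>p\<in>vertices G. \<forall>q\<in>vertices G. Am p q > 0 \<longrightarrow> P p \<longrightarrow> P q"
    and ex: "\<exists>p\<in>vertices G. P p" and q: "q \<in> vertices G"
  obtain p where p: "p \<in> vertices G" "P p" using ex by blast
  show "P q"
  proof (rule prop_all[where P=P, OF _ p q])
    fix e i assume "e \<in> mor G" "i < k" "dg G e = ebas i" "P (rg G e)"
    then show "P (sr G e)" using cl Am_edge rg_V sr_V by blast
  qed
qed

lemma mv_cong_V:
  assumes "\<And>q. q \<in> V \<Longrightarrow> u q = w q"
  shows "mv V a u p = mv V a w p"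
  unfolding mv_def using assms by simp

lemma xi_exists:
  assumes ne: "vertices G \<noteq> {}"
  shows "(\<forall>v\<in>vertices G. xivec k G y \<theta> v > 0) \<and> (\<forall>v. v \<notin> vertices G \<longrightarrow> xivec k G y \<theta> v = 0) \<and>
      (\<Sum>v\<in>vertices G. xivec k G y \<theta> v) = 1 \<and>
      (\<forall>i<k. \<forall>p\<in>vertices G. (\<Sum>q\<in>vertices G. Bmat G y \<theta> i p q * xivec k G y \<theta> q) = rhoB G y \<theta> i * xivec k G y \<theta> p)"
proof -
  let ?V = "vertices G"
  obtain z r where zpos: "\<forall>p\<in>?V. z p > 0" and ez: "\<forall>p\<in>?V. mv ?V Am z p = r * z p"
    using perron[OF finite_V ne, of Am] Am_nn Am_irred by blast
  have Bz: "mv ?V (Bmat G y \<theta> i) z p = rhoB G y \<theta> i * z p" if i: "i < k" and p: "p \<in> ?V" for i p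
  proof -
    let ?w = "mv ?V (Bmat G y \<theta> i) z"
    have "mv ?V Am ?w q = r * ?w q" if q: "q \<in> ?V" for q
    proof -
      have "mv ?V Am ?w q = (\<Sum>j<k. mv ?V (Bmat G y \<theta> j) ?w q)" by (rule mv_Am)
      also have "\<dots> = (\<Sum>j<k. mv ?V (Bmat G y \<theta> i) (mv ?V (Bmat G y \<theta> j) z) q)"
        by (rule sum.cong) (use mv_comm i in auto)
      also have "\<dots> = mv ?V (Bmat G y \<theta> i) (\<lambda>q. \<Sum>j<k. mv ?V (Bmat G y \<theta> j) z q) q"
        unfolding mv_def sum_distrib_left by (rule sum.swap)
      also have "\<dots> = mv ?V (Bmat G y \<theta> i) (\<lambda>q. r * z q) q"
        by (rule mv_cong_V) (use ez mv_Am in auto)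
      also have "\<dots> = r * ?w q" unfolding mv_def by (simp add: sum_distrib_left algebra_simps)
      finally show ?thesis .
    qed
    then obtain c where c: "\<forall>q\<in>?V. ?w q = c * z q"
      using eig_simple[OF finite_V Am_nn Am_irred, of z r ?w] zpos ez by blast
    have "specrad ?V (Bmat G y \<theta> i) = c"
      by (rule specrad_eq[OF finite_V ne, where z=z and c=c and a="Bmat G y \<theta> i"]) (use c zpos Bnn in auto)
    then show ?thesis using c p by (simp add: rhoB_def)
  qed
  define s where "s = (\<Sum>q\<in>?V. z q)"
  have spos: "s > 0" unfolding s_def using zpos ne finite_V by (intro sum_pos) auto
  define \<xi> where "\<xi> = (\<lambda>p. if p \<in> ?V then z p / s else 0)"
  let ?C = "\<lambda>\<xi>. (\<forall>v\<in>?V. \<xi> v > 0) \<and> (\<forall>v. v \<notin> ?V \<longrightarrow> \<xi> v = 0) \<and>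
      (\<Sum>v\<in>?V. \<xi> v) = 1 \<and>
      (\<forall>i<k. \<forall>p\<in>?V. (\<Sum>q\<in>?V. Bmat G y \<theta> i p q * \<xi> q) = rhoB G y \<theta> i * \<xi> p)"
  have C: "?C \<xi>"
  proof (intro conjI allI impI ballI)
    show "\<xi> v > 0" if "v \<in> ?V" for v using that zpos spos by (simp add: \<xi>_def)
    show "\<xi> v = 0" if "v \<notin> ?V" for v using that by (simp add: \<xi>_def)
    show "(\<Sum>v\<in>?V. \<xi> v) = 1" unfolding \<xi>_def using spos by (simp add: sum_divide_distrib[symmetric] s_def)
    fix i p assume i: "i < k" and p: "p \<in> ?V"
    have "(\<Sum>q\<in>?V. Bmat G y \<theta> i p q * \<xi> q) = mv ?V (Bmat G y \<theta> i) z p / s"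
      unfolding mv_def \<xi>_def by (simp add: sum_divide_distrib)
    then show "(\<Sum>q\<in>?V. Bmat G y \<theta> i p q * \<xi> q) = rhoB G y \<theta> i * \<xi> p"
      using Bz[OF i p] p by (simp add: \<xi>_def)
  qed
  have U: "\<xi>' = \<xi>" if C': "?C \<xi>'" for \<xi>'
  proof -
    let ?R = "\<Sum>i<k. rhoB G y \<theta> i"
    have eA: "mv ?V Am f p = ?R * f p" if Cf: "?C f" and pV: "p \<in> ?V" for f p
    proof -
      have "mv ?V Am f p = (\<Sum>i<k. mv ?V (Bmat G y \<theta> i) f p)" by (rule mv_Am)
      also have "\<dots> = (\<Sum>i<k. rhoB G y \<theta> i * f p)"
        by (rule sum.cong) (use Cf pV in \<open>auto simp: mv_def\<close>)
      finally show ?thesis by (simp add: sum_distrib_right)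
    qed
    have "\<forall>p\<in>?V. mv ?V Am \<xi> p = ?R * \<xi> p" using eA[OF C] by blast
    moreover have "\<forall>p\<in>?V. mv ?V Am \<xi>' p = ?R * \<xi>' p" using eA[OF C'] by blast
    ultimately obtain t where t: "\<forall>p\<in>?V. \<xi>' p = t * \<xi> p"
      using eig_simple[OF finite_V Am_nn Am_irred, of \<xi> ?R \<xi>'] C by blast
    have "1 = (\<Sum>p\<in>?V. \<xi>' p)" using C' by simp
    also have "\<dots> = t * (\<Sum>p\<in>?V. \<xi> p)" using t by (simp add: sum_distrib_left)
    finally have "t = 1" using C by simp
    show ?thesis
    proof
      fix v show "\<xi>' v = \<xi> v"
      proof (cases "v \<in> ?V")
        case True then show ?thesis using t \<open>t = 1\<close> by simp
      next
        case False then show ?thesis using C C' by simp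
      qed
    qed
  qed
  have "xivec k G y \<theta> = \<xi>" unfolding xivec_def
    by (rule the_equality, rule C, rule U)
  then show ?thesis using C by simp
qed

end

locale kgyn = kgy k G y \<theta> for k :: nat and G :: "'a kgraph" and y and \<theta> +
  assumes ne: "vertices G \<noteq> {}"
begin

abbreviation "\<xi> \<equiv> xivec k G y \<theta>"
abbreviation "\<rho> \<equiv> rhoB G y \<theta>"

lemmas XI = xi_exists[OF ne]

lemma xi_pos: "v \<in> vertices G \<Longrightarrow> \<xi> v > 0" using XI by blast
lemma xi_sum: "(\<Sum>v\<in>vertices G. \<xi> v) = 1" using XI by blast
lemma xi_eig: "i < k \<Longrightarrow> p \<in> vertices G \<Longrightarrow> (\<Sum>q\<in>vertices G. Bmat G y \<theta> i p q * \<xi> q) = \<rho> i * \<xi> p"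
  using XI by blast
lemma xi_le1: "v \<in> vertices G \<Longrightarrow> \<xi> v \<le> 1"
proof -
  assume v: "v \<in> vertices G"
  have "\<xi> v \<le> (\<Sum>v\<in>vertices G. \<xi> v)"
    by (rule member_le_sum) (use v finite_V xi_pos in \<open>auto intro: less_imp_le\<close>)
  then show ?thesis using xi_sum by simp
qed

lemma rho_nn: "i < k \<Longrightarrow> \<rho> i \<ge> 0"
proof -
  assume i: "i < k"
  obtain v where v: "v \<in> vertices G" using ne by blast
  have "0 \<le> (\<Sum>q\<in>vertices G. Bmat G y \<theta> i v q * \<xi> q)"
    by (intro sum_nonneg mult_nonneg_nonneg Bnn) (use xi_pos in \<open>auto intro: less_imp_le\<close>)
  then have "0 \<le> \<rho> i * \<xi> v" using xi_eig[OF i v] by simp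
  then show ?thesis using xi_pos[OF v] by (simp add: zero_le_mult_iff)
qed

lemma edge_ineq:
  assumes e: "e \<in> mor G" "i < k" "dg G e = ebas i"
  shows "exp (- \<theta> * y e) * \<xi> (sr G e) \<le> \<rho> i * \<xi> (rg G e)" and "\<rho> i > 0"
proof -
  have r: "rg G e \<in> vertices G" and s: "sr G e \<in> vertices G" using rg_V sr_V e by auto
  have "exp (- \<theta> * y e) * \<xi> (sr G e) \<le> Bmat G y \<theta> i (rg G e) (sr G e) * \<xi> (sr G e)"
    using edge_le[OF e(1,3)] xi_pos[OF s] by simp
  also have "\<dots> \<le> (\<Sum>q\<in>vertices G. Bmat G y \<theta> i (rg G e) q * \<xi> q)"
    by (rule member_le_sum[where f="\<lambda>q. Bmat G y \<theta> i (rg G e) q * \<xi> q"])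
      (use s finite_V in \<open>auto intro!: mult_nonneg_nonneg Bnn less_imp_le[OF xi_pos]\<close>)
  also have "\<dots> = \<rho> i * \<xi> (rg G e)" by (rule xi_eig[OF e(2) r])
  finally show le: "exp (- \<theta> * y e) * \<xi> (sr G e) \<le> \<rho> i * \<xi> (rg G e)" .
  have "0 < exp (- \<theta> * y e) * \<xi> (sr G e)" using xi_pos[OF s] by simp
  then have "0 < \<rho> i * \<xi> (rg G e)" using le by linarith
  then show "\<rho> i > 0" using xi_pos[OF r] by (simp add: zero_less_mult_iff)
qed

definition Pi :: "'a \<Rightarrow> real" where "Pi l = (\<Prod>i<k. inverse (\<rho> i ^ dg G l i))"
definition Wt :: "'a \<Rightarrow> real" where "Wt l = exp (- \<theta> * y l) * Pi l * \<xi> (sr G l)"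

lemma Pi_cmp:
  assumes "l \<in> mor G" "n \<in> mor G" "sr G l = rg G n"
  shows "Pi (cmp G l n) = Pi l * Pi n"
  unfolding Pi_def cmp_props(4)[OF assms] vadd_def
  by (simp add: power_add prod.distrib)

lemma Pi_edge: assumes "dg G e = ebas j" "j < k" shows "Pi e = inverse (\<rho> j)"
proof -
  have "Pi e = (\<Prod>i<k. if i = j then inverse (\<rho> i) else 1)"
    unfolding Pi_def assms(1) by (rule prod.cong) (auto simp: ebas_def)
  also have "\<dots> = inverse (\<rho> j)" using assms(2) by (simp add: prod.delta)
  finally show ?thesis .
qed

lemma Pi_V: "v \<in> vertices G \<Longrightarrow> Pi v = 1"
  by (simp add: Pi_def V_dg vzero_def)

lemma Pi_nn: "Pi l \<ge> 0"
  unfolding Pi_def by (intro prod_nonneg) (simp add: rho_nn)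

lemma rho_pos_deg: assumes "l \<in> mor G" "i < k" "dg G l i > 0" shows "\<rho> i > 0"
proof -
  obtain e l' where "e \<in> mor G" "dg G e = ebas i"
    by (rule split_front[OF assms]) blast
  then show ?thesis using edge_ineq(2) assms(2) by blast
qed

lemma Pi_pos: assumes "l \<in> mor G" shows "Pi l > 0"
  unfolding Pi_def
proof (rule prod_pos)
  fix i assume "i \<in> {..<k}"
  then show "0 < inverse (\<rho> i ^ dg G l i)"
    using rho_pos_deg[OF assms, of i] by (cases "dg G l i = 0") auto
qed

lemma Wt_pos: "l \<in> mor G \<Longrightarrow> Wt l > 0"
  unfolding Wt_def using Pi_pos xi_pos sr_V by (simp add: mult_pos_pos)

lemma Wt_nn: "l \<in> mor G \<Longrightarrow> Wt l \<ge> 0"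
  using Wt_pos less_imp_le by blast

lemma Wt_cmp:
  assumes "l \<in> mor G" "n \<in> mor G" "sr G l = rg G n"
  shows "Wt (cmp G l n) = exp (- \<theta> * y l) * Pi l * Wt n"
  unfolding Wt_def Pi_cmp[OF assms] y_cmp[OF assms] cmp_props(3)[OF assms]
  by (simp add: algebra_simps exp_add[symmetric])

lemma Wt_V: "v \<in> vertices G \<Longrightarrow> Wt v = \<xi> v"
  by (simp add: Wt_def Pi_V y_V V_sr)

lemma Wt_edge:
  assumes "e \<in> mor G" "j < k" "dg G e = ebas j"
  shows "Wt e \<le> \<xi> (rg G e)"
proof -
  have rp: "\<rho> j > 0" using edge_ineq(2)[OF assms] .
  have "Wt e = exp (- \<theta> * y e) * \<xi> (sr G e) / \<rho> j"
    unfolding Wt_def Pi_edge[OF assms(3,2)] by (simp add: field_simps)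
  also have "\<dots> \<le> \<rho> j * \<xi> (rg G e) / \<rho> j"
    using edge_ineq(1)[OF assms] rp by (intro divide_right_mono) auto
  finally show ?thesis using rp by simp
qed

lemma Wt_le_xi: "l \<in> mor G \<Longrightarrow> Wt l \<le> \<xi> (rg G l)"
proof (induction "sz l" arbitrary: l rule: less_induct)
  case less
  show ?case
  proof (cases "sz l = 0")
    case True
    then have "l \<in> vertices G" using sz0_vertex less.prems by blast
    then show ?thesis using Wt_V V_rg by simp
  next
    case False
    then obtain i where i: "i < k" "dg G l i > 0" by (auto simp: sz_def)
    obtain e l' where el: "e \<in> mor G" "l' \<in> mor G" "sr G e = rg G l'" "l = cmp G e l'"
      "dg G e = ebas i" "rg G e = rg G l" "sz l' < sz l"
      by (rule split_front[OF less.prems(1) i]) blast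
    have c: "0 \<le> exp (- \<theta> * y e) * Pi e" using Pi_nn by simp
    have "Wt l = exp (- \<theta> * y e) * Pi e * Wt l'" unfolding el(4) by (rule Wt_cmp[OF el(1-3)])
    also have "\<dots> \<le> exp (- \<theta> * y e) * Pi e * \<xi> (rg G l')"
      using less.hyps[OF el(7) el(2)] c by (rule mult_left_mono)
    also have "\<dots> = Wt e" using el(3) by (simp add: Wt_def)
    also have "\<dots> \<le> \<xi> (rg G e)" by (rule Wt_edge[OF el(1) i(1) el(5)])
    finally show ?thesis using el(6) by simp
  qed
qed

lemma Wt_le1: "l \<in> mor G \<Longrightarrow> Wt l \<le> 1"
  using Wt_le_xi xi_le1 rg_V by (meson order.trans)

lemma Wt_back:
  assumes "l \<in> mor G" "e \<in> mor G" "sr G l = rg G e" "j < k" "dg G e = ebas j"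
  shows "Wt (cmp G l e) \<le> Wt l"
proof -
  have c: "0 \<le> exp (- \<theta> * y l) * Pi l" using Pi_nn by simp
  have "Wt (cmp G l e) = exp (- \<theta> * y l) * Pi l * Wt e" by (rule Wt_cmp[OF assms(1-3)])
  also have "\<dots> \<le> exp (- \<theta> * y l) * Pi l * \<xi> (rg G e)"
    using Wt_edge[OF assms(2,4,5)] c by (rule mult_left_mono)
  also have "\<dots> = Wt l" using assms(3) by (simp add: Wt_def)
  finally show ?thesis .
qed

lemma decay_II:
  assumes i: "i < k" and gt: "\<rho> i > Max {Bmat G y \<theta> i v w | v w. v \<in> vertices G \<and> w \<in> vertices G}"
  shows "l \<in> mor G \<Longrightarrow> Wt l \<le> (Max {Bmat G y \<theta> i v w | v w. v \<in> vertices G \<and> w \<in> vertices G} / \<rho> i) ^ dg G l i"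
proof (induction "dg G l i" arbitrary: l)
  case 0
  then show ?case using Wt_le1 by simp
next
  case (Suc d)
  let ?M = "Max {Bmat G y \<theta> i v w | v w. v \<in> vertices G \<and> w \<in> vertices G}"
  have fM: "finite {Bmat G y \<theta> i v w | v w. v \<in> vertices G \<and> w \<in> vertices G}"
  proof -
    have "{Bmat G y \<theta> i v w | v w. v \<in> vertices G \<and> w \<in> vertices G} =
      (\<lambda>(v, w). Bmat G y \<theta> i v w) ` (vertices G \<times> vertices G)" by auto
    then show ?thesis using finite_V by simp
  qed
  obtain e l' where el: "e \<in> mor G" "l' \<in> mor G" "sr G e = rg G l'" "l = cmp G e l'"
    "dg G e = ebas i" "dg G l' i = dg G l i - 1"
    by (rule split_front[OF Suc.prems i]) (use Suc.hyps(2) in auto)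
  have Ble: "Bmat G y \<theta> i (rg G e) (sr G e) \<le> ?M"
    using fM rg_V[OF el(1)] sr_V[OF el(1)] by (intro Max_ge) auto
  have M0: "0 \<le> ?M" using Ble Bnn order.trans by blast
  have rp: "\<rho> i > 0" using M0 gt by linarith
  have "Wt l = exp (- \<theta> * y e) * Pi e * Wt l'" unfolding el(4) by (rule Wt_cmp[OF el(1-3)])
  also have "\<dots> = exp (- \<theta> * y e) / \<rho> i * Wt l'" using Pi_edge[OF el(5) i] by (simp add: field_simps)
  also have "\<dots> \<le> ?M / \<rho> i * (?M / \<rho> i) ^ d"
  proof (rule mult_mono)
    show "exp (- \<theta> * y e) / \<rho> i \<le> ?M / \<rho> i"
      using edge_le[OF el(1,5)] Ble rp by (intro divide_right_mono) auto
    have "d = dg G l' i" using el(6) Suc.hyps(2) by simp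
    from Suc.hyps(1)[OF this el(2)] this show "Wt l' \<le> (?M / \<rho> i) ^ d" by simp
  qed (use M0 rp Wt_nn[OF el(2)] in auto)
  also have "\<dots> = (?M / \<rho> i) ^ Suc d" by simp
  finally show ?case unfolding Suc.hyps(2) .
qed

lemma decay_I:
  assumes gt: "\<forall>i<k. \<rho> i > 1" and l: "l \<in> mor G"
  shows "Wt l \<le> inverse (\<rho> 0) ^ dg G l 0"
proof -
  have k0: "0 \<in> {..<k}" using kpos by simp
  have f01: "0 \<le> inverse (\<rho> i ^ dg G l i) \<and> inverse (\<rho> i ^ dg G l i) \<le> 1" if "i < k" for i
  proof -
    have "\<rho> i > 1" using gt that by blast
    then have "1 \<le> \<rho> i ^ dg G l i" by (intro one_le_power) simp
    then show ?thesis by (simp add: inverse_le_1_iff)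
  qed
  have "Pi l = inverse (\<rho> 0 ^ dg G l 0) * (\<Prod>i\<in>{..<k} - {0}. inverse (\<rho> i ^ dg G l i))"
    unfolding Pi_def by (rule prod.remove[OF _ k0]) simp
  also have "\<dots> \<le> inverse (\<rho> 0 ^ dg G l 0) * 1"
    using f01 f01[OF kpos] by (intro mult_left_mono prod_le_1) auto
  finally have Pl: "Pi l \<le> inverse (\<rho> 0) ^ dg G l 0" by (simp add: power_inverse)
  have "Wt l \<le> 1 * Pi l * 1" unfolding Wt_def
    using y_nn[OF l] th xi_le1[OF sr_V[OF l]] Pi_nn xi_pos[OF sr_V[OF l]]
    by (intro mult_mono) (auto simp: mult_nonneg_nonneg)
  then show ?thesis using Pl by simp
qed

lemma wyt_Wt: "l \<in> mor G \<Longrightarrow> wyt k G y \<theta> l = Wt l powr (1 / \<theta>)"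
proof -
  assume l: "l \<in> mor G"
  have nn: "0 \<le> Pi l * \<xi> (sr G l)" using Pi_nn xi_pos[OF sr_V[OF l]] by simp
  have "Wt l powr (1 / \<theta>) = exp (- \<theta> * y l) powr (1 / \<theta>) * (Pi l * \<xi> (sr G l)) powr (1 / \<theta>)"
    unfolding Wt_def mult.assoc by (rule powr_mult)
  also have "exp (- \<theta> * y l) powr (1 / \<theta>) = exp (- y l)" using th by (simp add: exp_powr_real)
  finally show ?thesis by (simp add: wyt_def Pi_def)
qed

end

lemma bdeg_Suc:
  assumes k: "0 < k"
  shows "bdeg k (Suc n) = vadd (bdeg k n) (ebas (n mod k))"
proof
  fix i
  show "bdeg k (Suc n) i = vadd (bdeg k n) (ebas (n mod k)) i"
  proof (cases "i < k")
    case False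
    then show ?thesis using k by (auto simp: bdeg_def vadd_def ebas_def)
  next
    case True
    have nk: "n mod k < k" using k by simp
    show ?thesis
    proof (cases "Suc (n mod k) = k")
      case True
      then have "Suc n mod k = 0" by (simp add: mod_Suc)
      moreover have "Suc n div k = Suc (n div k)" using \<open>Suc n mod k = 0\<close> by (simp add: div_Suc)
      ultimately show ?thesis using \<open>i < k\<close> True by (auto simp: bdeg_def vadd_def ebas_def)
    next
      case False
      then have m: "Suc n mod k = Suc (n mod k)" by (simp add: mod_Suc)
      have "Suc n div k = n div k" using m by (simp add: div_Suc)
      then show ?thesis using \<open>i < k\<close> m by (auto simp: bdeg_def vadd_def ebas_def)
    qed
  qed
qed

lemma bdeg_kvec: "kvec k (bdeg k n)" by (simp add: kvec_def bdeg_def)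
lemma bdeg_0: "bdeg k 0 = vzero" by (auto simp: bdeg_def vzero_def)

lemma bdeg_mono_Suc: "0 < k \<Longrightarrow> bdeg k n \<le> bdeg k (Suc n)"
  by (simp add: bdeg_Suc le_fun_def vadd_def)

lemma bdeg_mono: "0 < k \<Longrightarrow> m \<le> n \<Longrightarrow> bdeg k m \<le> bdeg k n"
  by (rule lift_Suc_mono_le[where f="bdeg k"]) (auto intro: bdeg_mono_Suc)

lemma bdeg_mult: "i < k \<Longrightarrow> bdeg k (k * M) i = M"
  by (simp add: bdeg_def)

lemma bdeg_unb:
  assumes "kvec k m"
  shows "\<exists>N. m \<le> bdeg k N"
proof (intro exI[of _ "k * (\<Sum>i<k. m i)"])
  show "m \<le> bdeg k (k * (\<Sum>i<k. m i))"
    unfolding le_fun_def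
  proof
    fix i show "m i \<le> bdeg k (k * (\<Sum>i<k. m i)) i"
    proof (cases "i < k")
      case True
      then have "m i \<le> (\<Sum>i<k. m i)" by (intro member_le_sum) auto
      then show ?thesis using True by (simp add: bdeg_mult)
    next
      case False then show ?thesis using assms by (simp add: kvec_def)
    qed
  qed
qed

lemma bdeg_ge_div: "i < k \<Longrightarrow> n div k \<le> bdeg k n i"
  by (simp add: bdeg_def)

lemma vsub_bdeg_Suc: "0 < k \<Longrightarrow> vsub (bdeg k (Suc n)) (bdeg k n) = ebas (n mod k)"
  by (simp add: bdeg_Suc vsub_def vadd_def)

lemma kvec_vzero: "kvec k vzero" by (simp add: kvec_def vzero_def)
lemma vzero_le: "vzero \<le> m" for m :: "nat \<Rightarrow> nat" by (simp add: le_fun_def vzero_def)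

context kg
begin

abbreviation "IP \<equiv> infpaths k G"

lemma ip_mor:
  assumes "x \<in> IP" "kvec k m" "kvec k n" "m \<le> n"
  shows "x m n \<in> mor G" "dg G (x m n) = vsub n m"
  using assms unfolding infpaths_def by blast+

lemma ip_cmp:
  assumes "x \<in> IP" "kvec k m" "kvec k n" "kvec k p" "m \<le> n" "n \<le> p"
  shows "sr G (x m n) = rg G (x n p)" "cmp G (x m n) (x n p) = x m p"
  using assms unfolding infpaths_def by blast+

lemma ip_undef:
  assumes "x \<in> IP" "\<not> (kvec k m \<and> kvec k n \<and> m \<le> n)"
  shows "x m n = undefined"
  using assms unfolding infpaths_def by blast

lemma vsub_0: "vsub n vzero = n" by (simp add: vsub_def vzero_def)

lemma bseg_mor: "x \<in> IP \<Longrightarrow> bseg k x n \<in> mor G"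
  unfolding bseg_def using ip_mor(1) bdeg_kvec kvec_vzero vzero_le by blast

lemma bseg_dg: "x \<in> IP \<Longrightarrow> dg G (bseg k x n) = bdeg k n"
  unfolding bseg_def using ip_mor(2)[OF _ kvec_vzero bdeg_kvec vzero_le] vsub_0 by simp

lemma bseg_0: "bseg k x 0 = prange x" by (simp add: bseg_def prange_def bdeg_0)

lemma prange_V: "x \<in> IP \<Longrightarrow> prange x \<in> vertices G"
proof -
  assume x: "x \<in> IP"
  have "prange x \<in> mor G" "dg G (prange x) = vzero"
    using ip_mor[OF x kvec_vzero kvec_vzero order.refl] vsub_0 by (simp_all add: prange_def)
  then show ?thesis by (simp add: vertices_def)
qed

lemma rg_bseg: "x \<in> IP \<Longrightarrow> rg G (bseg k x n) = prange x"
proof -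
  assume x: "x \<in> IP"
  have m1: "x vzero vzero \<in> mor G" by (rule ip_mor(1)[OF x kvec_vzero kvec_vzero order.refl])
  have m2: "x vzero (bdeg k n) \<in> mor G" by (rule ip_mor(1)[OF x kvec_vzero bdeg_kvec vzero_le])
  have c: "cmp G (x vzero vzero) (x vzero (bdeg k n)) = x vzero (bdeg k n)"
    and s: "sr G (x vzero vzero) = rg G (x vzero (bdeg k n))"
    using ip_cmp[OF x kvec_vzero kvec_vzero bdeg_kvec order.refl vzero_le] by simp_all
  have "rg G (x vzero (bdeg k n)) = rg G (cmp G (x vzero vzero) (x vzero (bdeg k n)))" using c by simp
  also have "\<dots> = rg G (x vzero vzero)" by (rule cmp_props(2)[OF m1 m2 s])
  also have "\<dots> = prange x" using V_rg prange_V[OF x] by (simp add: prange_def)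
  finally show ?thesis by (simp add: bseg_def)
qed

lemma bseg_Suc:
  fixes n :: nat
  assumes x: "x \<in> IP"
  defines "e \<equiv> x (bdeg k n) (bdeg k (Suc n))"
  shows "bseg k x (Suc n) = cmp G (bseg k x n) e" "e \<in> mor G" "dg G e = ebas (n mod k)"
    "sr G (bseg k x n) = rg G e"
proof -
  have le: "bdeg k n \<le> bdeg k (Suc n)" using bdeg_mono_Suc kpos by blast
  show "bseg k x (Suc n) = cmp G (bseg k x n) e" "sr G (bseg k x n) = rg G e"
    using ip_cmp[OF x kvec_vzero bdeg_kvec bdeg_kvec vzero_le le] unfolding e_def bseg_def by simp_all
  show "e \<in> mor G" "dg G e = ebas (n mod k)"
    using ip_mor[OF x bdeg_kvec bdeg_kvec le] vsub_bdeg_Suc[OF kpos] unfolding e_def by simp_all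
qed

lemma agree_down:
  assumes x: "x \<in> IP" and z: "z \<in> IP" and km: "kvec k m" and kp: "kvec k p" and mp: "m \<le> p"
    and eq: "x vzero p = z vzero p"
  shows "x vzero m = z vzero m" "x m p = z m p"
proof -
  have a: "sr G (x vzero m) = rg G (x m p)" "cmp G (x vzero m) (x m p) = x vzero p"
    using ip_cmp[OF x kvec_vzero km kp vzero_le mp] by simp_all
  have b: "sr G (z vzero m) = rg G (z m p)" "cmp G (z vzero m) (z m p) = z vzero p"
    using ip_cmp[OF z kvec_vzero km kp vzero_le mp] by simp_all
  have "x vzero m = z vzero m \<and> x m p = z m p"
  proof (rule fact_uniq)
    show "x vzero m \<in> mor G" by (rule ip_mor(1)[OF x kvec_vzero km vzero_le])
    show "x m p \<in> mor G" by (rule ip_mor(1)[OF x km kp mp])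
    show "z vzero m \<in> mor G" by (rule ip_mor(1)[OF z kvec_vzero km vzero_le])
    show "z m p \<in> mor G" by (rule ip_mor(1)[OF z km kp mp])
    show "dg G (x vzero m) = dg G (z vzero m)"
      by (simp add: ip_mor(2)[OF x kvec_vzero km vzero_le] ip_mor(2)[OF z kvec_vzero km vzero_le])
    show "dg G (x m p) = dg G (z m p)"
      by (simp add: ip_mor(2)[OF x km kp mp] ip_mor(2)[OF z km kp mp])
  qed (use a b eq in auto)
  then show "x vzero m = z vzero m" "x m p = z m p" by simp_all
qed

lemma agree_any:
  assumes x: "x \<in> IP" and z: "z \<in> IP" and km: "kvec k m" and kn: "kvec k n" and kp: "kvec k p"
    and mn: "m \<le> n" and np: "n \<le> p" and eq: "x vzero p = z vzero p"
  shows "x m n = z m n"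
proof -
  have mp: "m \<le> p" by (rule order_trans[OF mn np])
  have e: "x m p = z m p" by (rule agree_down(2)[where x=x and z=z and m=m and p=p, OF x z km kp mp eq])
  have a: "sr G (x m n) = rg G (x n p)" "cmp G (x m n) (x n p) = x m p"
    using ip_cmp[OF x km kn kp mn np] by simp_all
  have b: "sr G (z m n) = rg G (z n p)" "cmp G (z m n) (z n p) = z m p"
    using ip_cmp[OF z km kn kp mn np] by simp_all
  have "x m n = z m n \<and> x n p = z n p"
  proof (rule fact_uniq)
    show "x m n \<in> mor G" by (rule ip_mor(1)[OF x km kn mn])
    show "x n p \<in> mor G" by (rule ip_mor(1)[OF x kn kp np])
    show "z m n \<in> mor G" by (rule ip_mor(1)[OF z km kn mn])
    show "z n p \<in> mor G" by (rule ip_mor(1)[OF z kn kp np])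
    show "dg G (x m n) = dg G (z m n)"
      by (simp add: ip_mor(2)[OF x km kn mn] ip_mor(2)[OF z km kn mn])
    show "dg G (x n p) = dg G (z n p)"
      by (simp add: ip_mor(2)[OF x kn kp np] ip_mor(2)[OF z kn kp np])
  qed (use a b e in auto)
  then show ?thesis by simp
qed

lemma bseg_agree_down:
  assumes x: "x \<in> IP" and z: "z \<in> IP" and eq: "bseg k x n = bseg k z n" and mn: "m \<le> n"
  shows "bseg k x m = bseg k z m"
  using agree_down(1)[OF x z bdeg_kvec bdeg_kvec bdeg_mono[OF kpos mn]] eq by (simp add: bseg_def)

lemma all_agree:
  assumes x: "x \<in> IP" and z: "z \<in> IP" and eq: "\<And>n. bseg k x n = bseg k z n"
  shows "x = z"
proof (intro ext)
  fix m n
  show "x m n = z m n"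
  proof (cases "kvec k m \<and> kvec k n \<and> m \<le> n")
    case True
    obtain N where N: "n \<le> bdeg k N" using bdeg_unb True by blast
    show ?thesis
      by (rule agree_any[OF x z _ _ bdeg_kvec _ N]) (use True eq[of N] in \<open>auto simp: bseg_def\<close>)
  next
    case False
    then show ?thesis using ip_undef x z by metis
  qed
qed

lemma cyl_bseg:
  assumes x: "x \<in> IP"
  shows "z \<in> cylinder k G (bseg k x n) \<longleftrightarrow> z \<in> IP \<and> bseg k z n = bseg k x n"
  unfolding cylinder_def bseg_dg[OF x] by (simp add: bseg_def)

lemma cyl_sub_IP: "cylinder k G l \<subseteq> IP" by (auto simp: cylinder_def)

lemma cyl_inner:
  assumes x: "x \<in> cylinder k G l" and l: "l \<in> mor G"
  shows "\<exists>N. \<forall>z\<in>IP. bseg k z N = bseg k x N \<longrightarrow> z \<in> cylinder k G l"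
proof -
  have xI: "x \<in> IP" and xl: "x vzero (dg G l) = l" using x by (auto simp: cylinder_def)
  obtain N where N: "dg G l \<le> bdeg k N" using bdeg_unb dg_kvec[OF l] by blast
  have "z \<in> cylinder k G l" if z: "z \<in> IP" and eq: "bseg k z N = bseg k x N" for z
  proof -
    have "z vzero (dg G l) = x vzero (dg G l)"
      using agree_down(1)[OF z xI dg_kvec[OF l] bdeg_kvec N] eq by (simp add: bseg_def)
    then show ?thesis using z xl by (simp add: cylinder_def)
  qed
  then show ?thesis by blast
qed

definition mlen where "mlen x z = (GREATEST n. bseg k x n = bseg k z n)"

lemma meet:
  assumes x: "x \<in> IP" and z: "z \<in> IP" and ne: "x \<noteq> z" and r: "prange x = prange z"
  shows "bseg k x (mlen x z) = bseg k z (mlen x z)"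
    "\<And>n. bseg k x n = bseg k z n \<longleftrightarrow> n \<le> mlen x z"
    "pmeet k x z = bseg k x (mlen x z)"
proof -
  obtain N0 where N0: "bseg k x N0 \<noteq> bseg k z N0" using all_agree[OF x z] ne by blast
  have bnd: "\<forall>n. bseg k x n = bseg k z n \<longrightarrow> n \<le> N0"
  proof (intro allI impI)
    fix n assume "bseg k x n = bseg k z n"
    show "n \<le> N0"
    proof (rule ccontr)
      assume "\<not> n \<le> N0"
      then have "N0 \<le> n" by simp
      then show False using bseg_agree_down[OF x z \<open>bseg k x n = bseg k z n\<close>] N0 by blast
    qed
  qed
  have P0: "bseg k x 0 = bseg k z 0" using r by (simp add: bseg_0)
  show a: "bseg k x (mlen x z) = bseg k z (mlen x z)"
    unfolding mlen_def by (rule GreatestI_nat[where P="\<lambda>n. bseg k x n = bseg k z n", OF P0]) (use bnd in blast)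
  show "bseg k x n = bseg k z n \<longleftrightarrow> n \<le> mlen x z" for n
  proof
    assume "bseg k x n = bseg k z n"
    then show "n \<le> mlen x z" unfolding mlen_def by (rule Greatest_le_nat[where P="\<lambda>n. bseg k x n = bseg k z n"]) (use bnd in blast)
  next
    assume "n \<le> mlen x z"
    then show "bseg k x n = bseg k z n" using bseg_agree_down[OF x z a] by blast
  qed
  show "pmeet k x z = bseg k x (mlen x z)" by (simp add: pmeet_def mlen_def)
qed

end

locale kgd = kgyn k G y \<theta> for k :: nat and G :: "'a kgraph" and y and \<theta> +
  assumes decay: "\<exists>i<k. \<exists>c. 0 \<le> c \<and> c < 1 \<and> (\<forall>l\<in>mor G. Wt l \<le> c ^ dg G l i)"
begin

abbreviation "w \<equiv> wyt k G y \<theta>"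
abbreviation "d \<equiv> dyt k G y \<theta>"

lemma w_nn: "w l \<ge> 0" unfolding wyt_def by simp

lemma wb: "x \<in> IP \<Longrightarrow> w (bseg k x n) = Wt (bseg k x n) powr (1 / \<theta>)"
  using wyt_Wt bseg_mor by blast

lemma Wb_Suc: "x \<in> IP \<Longrightarrow> Wt (bseg k x (Suc n)) \<le> Wt (bseg k x n)"
proof -
  assume x: "x \<in> IP"
  have j: "n mod k < k" using kpos by simp
  show ?thesis
    using Wt_back[OF bseg_mor[OF x] bseg_Suc(2)[OF x] bseg_Suc(4)[OF x] j bseg_Suc(3)[OF x]]
      bseg_Suc(1)[OF x] by simp
qed

lemma wb_mono:
  assumes x: "x \<in> IP" and mn: "m \<le> n"
  shows "w (bseg k x n) \<le> w (bseg k x m)"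
proof -
  have "Wt (bseg k x n) \<le> Wt (bseg k x m)"
    by (rule lift_Suc_antimono_le[where f="\<lambda>n. Wt (bseg k x n)", OF _ mn]) (rule Wb_Suc[OF x])
  then show ?thesis unfolding wb[OF x]
    by (intro powr_mono2) (use th Wt_nn bseg_mor x in auto)
qed

lemma wb_pos: "x \<in> IP \<Longrightarrow> w (bseg k x n) > 0"
proof -
  assume x: "x \<in> IP"
  have "Wt (bseg k x n) > 0" by (rule Wt_pos[OF bseg_mor[OF x]])
  then show ?thesis by (simp add: wb[OF x])
qed

lemma wb_le1: "x \<in> IP \<Longrightarrow> w (bseg k x n) \<le> 1"
  unfolding wb using Wt_le1 bseg_mor Wt_nn th by (intro powr_le1) auto

lemma wb_decay:
  assumes x: "x \<in> IP" and e: "\<epsilon> > 0"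
  shows "\<exists>N. w (bseg k x N) < \<epsilon>"
proof -
  obtain i c where i: "i < k" and c: "0 \<le> c" "c < 1" and W: "\<And>l. l \<in> mor G \<Longrightarrow> Wt l \<le> c ^ dg G l i"
    using decay by blast
  obtain M where M: "c ^ M < \<epsilon> powr \<theta>" using real_arch_pow_inv[of "\<epsilon> powr \<theta>" c] e c by auto
  have "Wt (bseg k x (k * M)) \<le> c ^ bdeg k (k * M) i"
    using W[OF bseg_mor[OF x]] bseg_dg[OF x] by simp
  then have "Wt (bseg k x (k * M)) \<le> c ^ M" by (simp only: bdeg_mult[OF i])
  then have lt: "Wt (bseg k x (k * M)) < \<epsilon> powr \<theta>" using M by simp
  have "w (bseg k x (k * M)) < (\<epsilon> powr \<theta>) powr (1 / \<theta>)"
    unfolding wb[OF x] by (rule powr_less_mono2) (use th lt Wt_nn bseg_mor x in auto)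
  also have "\<dots> = \<epsilon>" using th e by (simp add: powr_powr)
  finally show ?thesis by blast
qed

lemma d_cases:
  assumes "x \<in> IP" "z \<in> IP"
  shows "d x z = (if prange x \<noteq> prange z then 1 else if x = z then 0 else w (bseg k x (mlen x z)))"
proof -
  have "pmeet k x z = bseg k x (mlen x z)" if "prange x = prange z" "x \<noteq> z"
    using meet(3)[OF assms that(2,1)] .
  then show ?thesis using assms by (simp add: dyt_def)
qed

lemma d_nn: "d x z \<ge> 0" unfolding dyt_def using w_nn by simp

lemma mlen_sym: "mlen x z = mlen z x" unfolding mlen_def by (simp add: eq_commute)

lemma d_sym: "d x z = d z x"
proof (cases "x \<in> IP \<and> z \<in> IP")
  case False then show ?thesis by (auto simp: dyt_def)
next
  case True
  then have x: "x \<in> IP" and z: "z \<in> IP" by auto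
  show ?thesis
  proof (cases "prange x = prange z \<and> x \<noteq> z")
    case True
    then have "bseg k x (mlen x z) = bseg k z (mlen x z)" using meet(1)[OF x z] by blast
    then show ?thesis using True d_cases[OF x z] d_cases[OF z x] mlen_sym[of z x] by (simp add: eq_commute)
  next
    case False
    then show ?thesis using d_cases[OF x z] d_cases[OF z x] by auto
  qed
qed

lemma d_le1: "x \<in> IP \<Longrightarrow> z \<in> IP \<Longrightarrow> d x z \<le> 1"
  using d_cases wb_le1 by simp

lemma d_pos: "x \<in> IP \<Longrightarrow> z \<in> IP \<Longrightarrow> x \<noteq> z \<Longrightarrow> d x z > 0"
  using d_cases wb_pos by simp

lemma d_ultra:
  assumes x: "x \<in> IP" and z: "z \<in> IP" and u: "u \<in> IP"
  shows "d x z \<le> max (d x u) (d u z)"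
proof (cases "x = z")
  case True then show ?thesis using d_cases[OF x z] d_nn by (simp add: le_max_iff_disj)
next
  case xz: False
  show ?thesis
  proof (cases "prange x = prange z")
    case False
    then have "prange x \<noteq> prange u \<or> prange u \<noteq> prange z" by auto
    then have "d x u = 1 \<or> d u z = 1" using d_cases[OF x u] d_cases[OF u z] by auto
    then show ?thesis using d_le1[OF x z] by (auto simp: le_max_iff_disj)
  next
    case rxz: True
    show ?thesis
    proof (cases "prange x = prange u")
      case False
      then have "d x u = 1" using d_cases[OF x u] by simp
      then show ?thesis using d_le1[OF x z] by (auto simp: le_max_iff_disj)
    next
      case rxu: True
      then have ruz: "prange u = prange z" using rxz by simp
      show ?thesis
      proof (cases "u = x \<or> u = z")
        case True
        then show ?thesis using d_cases[OF x z] d_cases[OF x u] d_cases[OF u z] d_nn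
          by (auto simp: le_max_iff_disj)
      next
        case False
        then have ux: "x \<noteq> u" and uz: "u \<noteq> z" by auto
        define L1 where "L1 = mlen x u"
        define L2 where "L2 = mlen u z"
        define m where "m = min L1 L2"
        have a1: "bseg k x m = bseg k u m" using meet(2)[OF x u ux rxu, of m] by (simp add: m_def L1_def)
        have a2: "bseg k u m = bseg k z m" using meet(2)[OF u z uz ruz, of m] by (simp add: m_def L2_def)
        have "m \<le> mlen x z" using meet(2)[OF x z xz rxz, of m] a1 a2 by simp
        then have "d x z \<le> w (bseg k x m)"
          using d_cases[OF x z] xz rxz wb_mono[OF x] by simp
        also have "\<dots> \<le> max (d x u) (d u z)"
        proof (cases "L1 \<le> L2")
          case True
          then have "w (bseg k x m) = d x u" using d_cases[OF x u] ux rxu by (simp add: m_def L1_def)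
          then show ?thesis by simp
        next
          case False
          then have "w (bseg k x m) = w (bseg k u L2)" using a1 by (simp add: m_def)
          also have "\<dots> = d u z" using d_cases[OF u z] uz ruz by (simp add: L2_def)
          finally show ?thesis by simp
        qed
        finally show ?thesis .
      qed
    qed
  qed
qed

lemma d_metric: "Metric_space IP d"
proof
  show "0 \<le> d x z" for x z by (rule d_nn)
  show "d x z = d z x" for x z by (rule d_sym)
  show "d x z = 0 \<longleftrightarrow> x = z" if "x \<in> IP" "z \<in> IP" for x z
    using d_pos[OF that] d_cases[OF that] by fastforce
  show "d x z \<le> d x u + d u z" if "x \<in> IP" "u \<in> IP" "z \<in> IP" for x u z
    using d_ultra[OF that(1,3,2)] d_nn[of x u] d_nn[of u z] by linarith
qed

lemma d_ultrametric: "is_ultrametric IP d"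
  unfolding is_ultrametric_def using d_metric d_ultra by blast

interpretation M: Metric_space IP d by (rule d_metric)

lemma cyl_in_ball:
  assumes x: "x \<in> IP" and lt: "w (bseg k x N) < r"
  shows "cylinder k G (bseg k x N) \<subseteq> M.mball x r"
proof
  fix z assume "z \<in> cylinder k G (bseg k x N)"
  then have z: "z \<in> IP" and eq: "bseg k z N = bseg k x N" using cyl_bseg[OF x] by auto
  have rr: "prange x = prange z" using bseg_agree_down[OF z x eq, of 0] by (simp add: bseg_0)
  have "d x z < r"
  proof (cases "x = z")
    case True then show ?thesis using d_cases[OF x z] wb_pos[OF x, of N] lt by simp
  next
    case False
    have "N \<le> mlen x z" using meet(2)[OF x z False rr, of N] eq by simp
    then have "w (bseg k x (mlen x z)) \<le> w (bseg k x N)" by (rule wb_mono[OF x])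
    then show ?thesis using d_cases[OF x z] False rr lt by simp
  qed
  then show "z \<in> M.mball x r" using x z by simp
qed

lemma ball_in_cyl:
  assumes x: "x \<in> IP" and z: "z \<in> IP" and lt: "d x z < w (bseg k x N)"
  shows "bseg k z N = bseg k x N"
proof (cases "x = z")
  case True then show ?thesis by simp
next
  case False
  have rr: "prange x = prange z"
  proof (rule ccontr)
    assume "prange x \<noteq> prange z"
    then have "d x z = 1" using d_cases[OF x z] by simp
    then show False using lt wb_le1[OF x, of N] by simp
  qed
  have "N \<le> mlen x z"
  proof (rule ccontr)
    assume "\<not> N \<le> mlen x z"
    then have "w (bseg k x N) \<le> w (bseg k x (mlen x z))" by (intro wb_mono[OF x]) simp
    then show False using lt d_cases[OF x z] False rr by simp
  qed
  then show ?thesis using meet(2)[OF x z False rr, of N] by simp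
qed

lemma topo_eq: "M.mtopology = cylinder_topology k G"
proof -
  let ?C = "{cylinder k G l | l. l \<in> mor G}"
  have "openin M.mtopology U \<longleftrightarrow> generate_topology_on ?C U" for U
  proof
    assume U: "openin M.mtopology U"
    then have US: "U \<subseteq> IP" and ball: "\<And>x. x \<in> U \<Longrightarrow> \<exists>r>0. M.mball x r \<subseteq> U"
      by (auto simp: M.openin_mtopology)
    have "\<forall>x\<in>U. \<exists>N. cylinder k G (bseg k x N) \<subseteq> U"
    proof
      fix x assume xU: "x \<in> U"
      obtain r where r: "r > 0" "M.mball x r \<subseteq> U" using ball[OF xU] by blast
      have x: "x \<in> IP" using US xU by blast
      obtain N where "w (bseg k x N) < r" using wb_decay[OF x r(1)] by blast
      then show "\<exists>N. cylinder k G (bseg k x N) \<subseteq> U" using cyl_in_ball[OF x] r(2) by blast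
    qed
    then obtain N where N: "\<And>x. x \<in> U \<Longrightarrow> cylinder k G (bseg k x (N x)) \<subseteq> U" by metis
    have "U = \<Union>((\<lambda>x. cylinder k G (bseg k x (N x))) ` U)"
    proof
      show "U \<subseteq> \<Union>((\<lambda>x. cylinder k G (bseg k x (N x))) ` U)"
      proof
        fix x assume xU: "x \<in> U"
        then have x: "x \<in> IP" using US by blast
        then have "x \<in> cylinder k G (bseg k x (N x))" using cyl_bseg[OF x] by simp
        then show "x \<in> \<Union>((\<lambda>x. cylinder k G (bseg k x (N x))) ` U)" using xU by blast
      qed
      show "\<Union>((\<lambda>x. cylinder k G (bseg k x (N x))) ` U) \<subseteq> U" using N by blast
    qed
    moreover have "generate_topology_on ?C (\<Union>((\<lambda>x. cylinder k G (bseg k x (N x))) ` U))"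
    proof (rule generate_topology_on.UN)
      fix K assume "K \<in> (\<lambda>x. cylinder k G (bseg k x (N x))) ` U"
      then obtain x where "x \<in> U" "K = cylinder k G (bseg k x (N x))" by blast
      then have "K \<in> ?C" using US bseg_mor by blast
      then show "generate_topology_on ?C K" by (rule generate_topology_on.Basis)
    qed
    ultimately show "generate_topology_on ?C U" by simp
  next
    assume "generate_topology_on ?C U"
    then show "openin M.mtopology U"
    proof (induction rule: generate_topology_on.induct)
      case Empty then show ?case by simp
    next
      case (Int a b)
      then have "openin M.mtopology a" "openin M.mtopology b" by simp_all
      then show ?case by (rule openin_Int)
    next
      case (UN K) then show ?case by (intro openin_Union) blast
    next
      case (Basis s)
      then obtain l where l: "l \<in> mor G" and s: "s = cylinder k G l" by blast
      show ?case unfolding M.openin_mtopology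
      proof (intro conjI allI impI)
        show "s \<subseteq> IP" using s cyl_sub_IP by blast
        fix x assume xs: "x \<in> s"
        then have x: "x \<in> IP" using s cyl_sub_IP by blast
        obtain N where N: "\<forall>z\<in>IP. bseg k z N = bseg k x N \<longrightarrow> z \<in> cylinder k G l"
          using cyl_inner[OF _ l] xs s by blast
        have "M.mball x (w (bseg k x N)) \<subseteq> s"
        proof
          fix z assume "z \<in> M.mball x (w (bseg k x N))"
          then have z: "z \<in> IP" and lt: "d x z < w (bseg k x N)" by auto
          show "z \<in> s" using N ball_in_cyl[OF x z lt] z s by blast
        qed
        then show "\<exists>r>0. M.mball x r \<subseteq> s" using wb_pos[OF x] by blast
      qed
    qed
  qed
  then show ?thesis unfolding cylinder_topology_def topology_eq
    by (simp add: openin_topology_generated_by_iff)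
qed

end

theorem proposition6p9:
  fixes k :: nat and G :: "'a kgraph" and y :: "'a \<Rightarrow> real" and \<theta> :: real
  assumes "is_kgraph k G"
    and "finite_kgraph k G"
    and "strongly_connected G"
    and "Rplus_functor G y"
    and "0 < \<theta>"
    and "card (vertices G) = 1 \<Longrightarrow> cond_wI k G y \<theta>"
    and "card (vertices G) \<noteq> 1 \<Longrightarrow> cond_wII k G y \<theta>"
  shows "is_ultrametric (infpaths k G) (dyt k G y \<theta>)
    \<and> Metric_space.mtopology (infpaths k G) (dyt k G y \<theta>) = cylinder_topology k G"
proof (cases "vertices G = {}")
  case True
  interpret kg k G using assms(1-3) by unfold_locales
  have IP0: "infpaths k G = {}" using prange_V True by blast
  interpret M: Metric_space "infpaths k G" "dyt k G y \<theta>"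
    by unfold_locales (simp_all add: IP0 dyt_def)
  have "is_ultrametric (infpaths k G) (dyt k G y \<theta>)"
    unfolding is_ultrametric_def using M.Metric_space_axioms IP0 by simp
  moreover have "M.mtopology = cylinder_topology k G"
  proof -
    have C0: "\<Union>{cylinder k G l | l. l \<in> mor G} = {}" using cyl_sub_IP IP0 by blast
    have "openin M.mtopology U \<longleftrightarrow> openin (cylinder_topology k G) U" for U
    proof -
      have "openin M.mtopology U \<longleftrightarrow> U = {}" using M.openin_mtopology IP0 by auto
      moreover have "openin (cylinder_topology k G) U \<longleftrightarrow> U = {}"
      proof
        assume "openin (cylinder_topology k G) U"
        then have "U \<subseteq> topspace (cylinder_topology k G)" by (rule openin_subset)
        then show "U = {}" using C0 by (simp add: cylinder_topology_def)
      qed simp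
      ultimately show ?thesis by simp
    qed
    then show ?thesis by (simp add: topology_eq)
  qed
  ultimately show ?thesis by simp
next
  case False
  interpret kgyn k G y \<theta> using assms(1-5) False by unfold_locales
  have decay: "\<exists>i<k. \<exists>c. 0 \<le> c \<and> c < 1 \<and> (\<forall>l\<in>mor G. Wt l \<le> c ^ dg G l i)"
  proof (cases "card (vertices G) = 1")
    case True
    then have gt: "\<forall>i<k. \<rho> i > 1" using assms(6) by (simp add: cond_wI_def)
    then have r0: "\<rho> 0 > 1" using kpos by blast
    show ?thesis
    proof (intro exI conjI ballI)
      show "0 < k" by (rule kpos)
      show "0 \<le> inverse (\<rho> 0)" using r0 by simp
      show "inverse (\<rho> 0) < 1" using r0 by (simp add: inverse_less_1_iff)
      show "Wt l \<le> inverse (\<rho> 0) ^ dg G l 0" if "l \<in> mor G" for l by (rule decay_I[OF gt that])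
    qed
  next
    case False
    then obtain i where i: "i < k"
      and gt: "\<rho> i > Max {Bmat G y \<theta> i v w | v w. v \<in> vertices G \<and> w \<in> vertices G}"
      using assms(7) by (auto simp: cond_wII_def)
    let ?M = "Max {Bmat G y \<theta> i v w | v w. v \<in> vertices G \<and> w \<in> vertices G}"
    have fM: "finite {Bmat G y \<theta> i v w | v w. v \<in> vertices G \<and> w \<in> vertices G}"
    proof -
      have "{Bmat G y \<theta> i v w | v w. v \<in> vertices G \<and> w \<in> vertices G} =
        (\<lambda>(v, w). Bmat G y \<theta> i v w) ` (vertices G \<times> vertices G)" by auto
      then show ?thesis using finite_V by simp
    qed
    obtain v0 where v0: "v0 \<in> vertices G" using ne by blast
    have "Bmat G y \<theta> i v0 v0 \<le> ?M" using fM v0 by (intro Max_ge) auto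
    then have M0: "0 \<le> ?M" using Bnn order.trans by blast
    then have rp: "\<rho> i > 0" using gt by linarith
    show ?thesis
    proof (intro exI conjI ballI)
      show "i < k" by (rule i)
      show "0 \<le> ?M / \<rho> i" using M0 rp by simp
      show "?M / \<rho> i < 1" using gt rp by simp
      show "Wt l \<le> (?M / \<rho> i) ^ dg G l i" if "l \<in> mor G" for l by (rule decay_II[OF i gt that])
    qed
  qed
  interpret kgd k G y \<theta> using decay by unfold_locales
  show ?thesis using d_ultrametric topo_eq by simp
qed


end
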